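(* Let $\mathcal{C}$ be a class of finite graphs each of which is a complete $d$-partite graph $K_{m_0,\dots,m_{d-1}}$ for some $d\in\mathbb{N}$ (with $d$ allowed to vary between graphs). For such a graph let $M:=\max_{i<d}m_i$ and $N:=\sum_{i<d}m_i$. The following are equivalent: (1) $\mathcal{C}$ is $\mathrm{MSO}_2$-orderable; (2) there is a constant $s\in\mathbb{N}$ such that $\mathcal{C}$ has property $\mathsf{SEP}(f)$ for $f(k)=2^{s(k+1)}$; (3) there is a constant $s\in\mathbb{N}$ such that every $K_{m_0,\dots,m_{d-1}}\in\mathcal{C}$ satisfies $M\le 2^{s(N-M+1)}$.
   Context: For $G=\langle V,E\rangle$, $\lceil G\rceil=\langle V\cup E,\mathrm{inc}\rangle$ (universe $V\cup E$, incidence relation). An MSO-formula $\varphi(x,y;Z_0,\dots,Z_{k-1})$ defines an order on a class $\mathcal{K}$ of structures if for every non-empty $\mathfrak{A}\in\mathcal{K}$ there are $P_0,\dots,P_{k-1}\subseteq A$ with $\{(a,b):\mathfrak{A}\models\varphi(a,b;\bar P)\}$ a linear order on $A$; a graph class is $\mathrm{MSO}_2$-orderable if some MSO-formula defines an order on $\{\lceil G\rceil\}$. $\mathrm{Sep}(G,k)$ is the maximum over vertex sets $S$, $|S|\le k$, of the number of connected components of $G-S$; $\mathcal{C}$ has $\mathsf{SEP}(f)$ if $\mathrm{Sep}(G,k)\le f(k)$ for all $G\in\mathcal{C}$ and all $k$. *)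

theory Defs
  imports Main
begin

type_synonym 'v graph = "'v set \<times> 'v set set"

definition finite_graph :: "'v graph \<Rightarrow> bool" where
  "finite_graph G \<longleftrightarrow> finite (fst G) \<and>
     (\<forall>e\<in>snd G. e \<subseteq> fst G \<and> card e = 2)"

text \<open>G is the complete d-partite graph with parts P 0, ..., P (d-1),
  i.e. G = K_{m_0,...,m_{d-1}} with m_i = card (P i).\<close>
definition complete_multipartite :: "'v graph \<Rightarrow> nat \<Rightarrow> (nat \<Rightarrow> 'v set) \<Rightarrow> bool" where
  "complete_multipartite G d P \<longleftrightarrow>
     (\<forall>i<d. \<forall>j<d. i \<noteq> j \<longrightarrow> P i \<inter> P j = {}) \<and>
     fst G = (\<Union>i<d. P i) \<and>
     snd G = {{u, v} | u v i j. i < d \<and> j < d \<and> i \<noteq> j \<and> u \<in> P i \<and> v \<in> P j}"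

definition part_max :: "nat \<Rightarrow> (nat \<Rightarrow> 'v set) \<Rightarrow> nat" where
  "part_max d P = Max (insert 0 ((\<lambda>i. card (P i)) ` {..<d}))"

definition part_sum :: "nat \<Rightarrow> (nat \<Rightarrow> 'v set) \<Rightarrow> nat" where
  "part_sum d P = (\<Sum>i<d. card (P i))"

definition reachable :: "'v graph \<Rightarrow> 'v \<Rightarrow> 'v \<Rightarrow> bool" where
  "reachable G = (\<lambda>u v. u \<in> fst G \<and> v \<in> fst G \<and> (\<exists>e\<in>snd G. e = {u, v}))\<^sup>*\<^sup>*"

definition components :: "'v graph \<Rightarrow> 'v set set" where
  "components G = {{w \<in> fst G. reachable G v w} | v. v \<in> fst G}"

definition delete_vertices :: "'v graph \<Rightarrow> 'v set \<Rightarrow> 'v graph" where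
  "delete_vertices G S = (fst G - S, {e \<in> snd G. e \<inter> S = {}})"

definition Sep :: "'v graph \<Rightarrow> nat \<Rightarrow> nat" where
  "Sep G k = Max {card (components (delete_vertices G S)) | S. S \<subseteq> fst G \<and> card S \<le> k}"

definition has_SEP :: "'v graph set \<Rightarrow> (nat \<Rightarrow> nat) \<Rightarrow> bool" where
  "has_SEP C f \<longleftrightarrow> (\<forall>G\<in>C. \<forall>k. Sep G k \<le> f k)"

datatype mso =
    Rel nat nat
  | Eq nat nat
  | Mem nat nat
  | Neg mso
  | Conj mso mso
  | Ex1 nat mso
  | ExS nat mso

fun fvars :: "mso \<Rightarrow> nat set" where
  "fvars (Rel i j) = {i, j}"
| "fvars (Eq i j) = {i, j}"
| "fvars (Mem i _) = {i}"
| "fvars (Neg \<phi>) = fvars \<phi>"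
| "fvars (Conj \<phi> \<psi>) = fvars \<phi> \<union> fvars \<psi>"
| "fvars (Ex1 i \<phi>) = fvars \<phi> - {i}"
| "fvars (ExS _ \<phi>) = fvars \<phi>"

fun svars :: "mso \<Rightarrow> nat set" where
  "svars (Rel _ _) = {}"
| "svars (Eq _ _) = {}"
| "svars (Mem _ j) = {j}"
| "svars (Neg \<phi>) = svars \<phi>"
| "svars (Conj \<phi> \<psi>) = svars \<phi> \<union> svars \<psi>"
| "svars (Ex1 _ \<phi>) = svars \<phi>"
| "svars (ExS j \<phi>) = svars \<phi> - {j}"

fun sat :: "'a set \<Rightarrow> ('a \<times> 'a) set \<Rightarrow> (nat \<Rightarrow> 'a) \<Rightarrow> (nat \<Rightarrow> 'a set) \<Rightarrow> mso \<Rightarrow> bool" where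
  "sat A R \<alpha> \<beta> (Rel i j) = ((\<alpha> i, \<alpha> j) \<in> R)"
| "sat A R \<alpha> \<beta> (Eq i j) = (\<alpha> i = \<alpha> j)"
| "sat A R \<alpha> \<beta> (Mem i j) = (\<alpha> i \<in> \<beta> j)"
| "sat A R \<alpha> \<beta> (Neg \<phi>) = (\<not> sat A R \<alpha> \<beta> \<phi>)"
| "sat A R \<alpha> \<beta> (Conj \<phi> \<psi>) = (sat A R \<alpha> \<beta> \<phi> \<and> sat A R \<alpha> \<beta> \<psi>)"
| "sat A R \<alpha> \<beta> (Ex1 i \<phi>) = (\<exists>a\<in>A. sat A R (\<alpha>(i := a)) \<beta> \<phi>)"
| "sat A R \<alpha> \<beta> (ExS j \<phi>) = (\<exists>X. X \<subseteq> A \<and> sat A R \<alpha> (\<beta>(j := X)) \<phi>)"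

text \<open>The formula \<phi>(x,y;Z_0,...,Z_{k-1}) has free element variables among
  x = 0, y = 1 and free set variables among 0, ..., k-1.  It defines an order
  on a class K of structures (A, R) if for every nonempty such structure there
  are parameters P_0, ..., P_{k-1} \<subseteq> A such that the defined binary relation
  is a linear order on A.\<close>
definition defines_order :: "mso \<Rightarrow> nat \<Rightarrow> ('a set \<times> ('a \<times> 'a) set) set \<Rightarrow> bool" where
  "defines_order \<phi> k K \<longleftrightarrow>
     fvars \<phi> \<subseteq> {0, 1} \<and> svars \<phi> \<subseteq> {..<k} \<and>
     (\<forall>(A, R)\<in>K. A \<noteq> {} \<longrightarrow>
        (\<exists>P :: nat \<Rightarrow> 'a set. (\<forall>i<k. P i \<subseteq> A) \<and>
           linear_order_on A
             {(a, b). a \<in> A \<and> b \<in> A \<and>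
                sat A R (\<lambda>i. if i = 0 then a else b) (\<lambda>i. if i < k then P i else {}) \<phi>}))"

definition inc_structure :: "'v graph \<Rightarrow> ('v + 'v set) set \<times> (('v + 'v set) \<times> ('v + 'v set)) set" where
  "inc_structure G = (Inl ` fst G \<union> Inr ` snd G,
                      {(Inl v, Inr e) | v e. v \<in> fst G \<and> e \<in> snd G \<and> v \<in> e})"

definition MSO2_orderable :: "'v graph set \<Rightarrow> bool" where
  "MSO2_orderable C \<longleftrightarrow> (\<exists>\<phi> k. defines_order \<phi> k (inc_structure ` C))"

end

theory Submission
  imports Defs "HOL-Library.FuncSet" "HOL-Library.List_Lexorder" "HOL-Library.Product_Lexorder"
begin

definition FF :: mso where "FF = Neg (Eq 0 0)"
definition Disj :: "mso \<Rightarrow> mso \<Rightarrow> mso" where "Disj a b = Neg (Conj (Neg a) (Neg b))"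
definition Imp :: "mso \<Rightarrow> mso \<Rightarrow> mso" where "Imp a b = Neg (Conj a (Neg b))"
definition Iff :: "mso \<Rightarrow> mso \<Rightarrow> mso" where "Iff a b = Conj (Imp a b) (Imp b a)"
definition All1 :: "nat \<Rightarrow> mso \<Rightarrow> mso" where "All1 i a = Neg (Ex1 i (Neg a))"
definition AllS :: "nat \<Rightarrow> mso \<Rightarrow> mso" where "AllS i a = Neg (ExS i (Neg a))"

fun BigOr :: "nat \<Rightarrow> (nat \<Rightarrow> mso) \<Rightarrow> mso" where
  "BigOr 0 f = FF"
| "BigOr (Suc n) f = Disj (BigOr n f) (f n)"

definition BigAnd :: "nat \<Rightarrow> (nat \<Rightarrow> mso) \<Rightarrow> mso" where
  "BigAnd n f = Neg (BigOr n (\<lambda>j. Neg (f j)))"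

lemma sat_derived[simp]:
  "sat A R \<alpha> \<beta> FF = False"
  "sat A R \<alpha> \<beta> (Disj a b) = (sat A R \<alpha> \<beta> a \<or> sat A R \<alpha> \<beta> b)"
  "sat A R \<alpha> \<beta> (Imp a b) = (sat A R \<alpha> \<beta> a \<longrightarrow> sat A R \<alpha> \<beta> b)"
  "sat A R \<alpha> \<beta> (Iff a b) = (sat A R \<alpha> \<beta> a \<longleftrightarrow> sat A R \<alpha> \<beta> b)"
  "sat A R \<alpha> \<beta> (All1 i a) = (\<forall>x\<in>A. sat A R (\<alpha>(i:=x)) \<beta> a)"
  "sat A R \<alpha> \<beta> (AllS i a) = (\<forall>X. X \<subseteq> A \<longrightarrow> sat A R \<alpha> (\<beta>(i:=X)) a)"
  by (auto simp: FF_def Disj_def Imp_def Iff_def All1_def AllS_def)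

lemma sat_BigOr[simp]: "sat A R \<alpha> \<beta> (BigOr n f) = (\<exists>j<n. sat A R \<alpha> \<beta> (f j))"
  by (induction n) (auto simp: less_Suc_eq)

lemma sat_BigAnd[simp]: "sat A R \<alpha> \<beta> (BigAnd n f) = (\<forall>j<n. sat A R \<alpha> \<beta> (f j))"
  by (auto simp: BigAnd_def)

lemma vars_derived[simp]:
  "fvars FF = {0}" "svars FF = {}"
  "fvars (Disj a b) = fvars a \<union> fvars b" "svars (Disj a b) = svars a \<union> svars b"
  "fvars (Imp a b) = fvars a \<union> fvars b" "svars (Imp a b) = svars a \<union> svars b"
  "fvars (Iff a b) = fvars a \<union> fvars b" "svars (Iff a b) = svars a \<union> svars b"
  "fvars (All1 i a) = fvars a - {i}" "svars (All1 i a) = svars a"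
  "fvars (AllS i a) = fvars a" "svars (AllS i a) = svars a - {i}"
  by (auto simp: FF_def Disj_def Imp_def Iff_def All1_def AllS_def)

lemma fvars_BigOr: "(\<And>j. j < n \<Longrightarrow> fvars (f j) \<subseteq> S) \<Longrightarrow> 0 \<in> S \<Longrightarrow> fvars (BigOr n f) \<subseteq> S"
  by (induction n) auto
lemma svars_BigOr: "(\<And>j. j < n \<Longrightarrow> svars (f j) \<subseteq> S) \<Longrightarrow> svars (BigOr n f) \<subseteq> S"
  by (induction n) auto

definition colcond :: "nat \<Rightarrow> nat \<Rightarrow> mso" where
  "colcond x y = Disj (Conj (Mem x 1) (Mem y 2)) (Disj (Conj (Mem x 2) (Mem y 3)) (Conj (Mem x 3) (Mem y 1)))"

definition gsucc :: "nat \<Rightarrow> nat \<Rightarrow> nat \<Rightarrow> mso" where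
  "gsucc n x y = Ex1 n (Conj (Rel x n) (Conj (Rel y n) (Conj (Mem n 4) (colcond x y))))"

definition gchle :: "nat \<Rightarrow> nat \<Rightarrow> nat \<Rightarrow> mso" where
  "gchle n x y = AllS 7 (Imp (Conj (Mem x 7) (All1 n (All1 (Suc n)
      (Imp (Conj (Mem n 7) (gsucc (n+2) n (Suc n))) (Mem (Suc n) 7))))) (Mem y 7))"

definition gebit :: "nat \<Rightarrow> nat \<Rightarrow> nat \<Rightarrow> nat \<Rightarrow> mso" where
  "gebit n x w j = Ex1 n (Conj (Rel x n) (Conj (Rel w n) (Mem n (8+j))))"

definition glexlt :: "nat \<Rightarrow> (nat \<Rightarrow> nat \<Rightarrow> mso) \<Rightarrow> nat \<Rightarrow> nat \<Rightarrow> mso" where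
  "glexlt s b x y = BigOr s (\<lambda>j. Conj (BigAnd j (\<lambda>j'. Iff (b j' x) (b j' y))) (Conj (Neg (b j x)) (b j y)))"

definition glexeq :: "nat \<Rightarrow> (nat \<Rightarrow> nat \<Rightarrow> mso) \<Rightarrow> nat \<Rightarrow> nat \<Rightarrow> mso" where
  "glexeq s b x y = BigAnd s (\<lambda>j. Iff (b j x) (b j y))"

definition gcodelt :: "nat \<Rightarrow> nat \<Rightarrow> nat \<Rightarrow> nat \<Rightarrow> mso" where
  "gcodelt s n x y = Disj (glexlt s (\<lambda>j z. Mem z (8+j)) x y)
     (Conj (glexeq s (\<lambda>j z. Mem z (8+j)) x y)
       (Ex1 n (Conj (Mem n 6) (Conj
          (All1 (Suc n) (Imp (Conj (Mem (Suc n) 6) (Conj (gchle (n+2) (Suc n) n) (Neg (Eq (Suc n) n))))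
               (glexeq s (\<lambda>j z. gebit (n+2) z (Suc n) j) x y)))
          (glexlt s (\<lambda>j z. gebit (n+2) z n j) x y)))))"

definition gvle :: "nat \<Rightarrow> nat \<Rightarrow> nat \<Rightarrow> nat \<Rightarrow> mso" where
  "gvle s n x y = Disj (Conj (Neg (Mem x 5)) (Conj (Neg (Mem y 5)) (gchle n x y)))
     (Disj (Conj (Neg (Mem x 5)) (Mem y 5))
       (Conj (Mem x 5) (Conj (Mem y 5) (Disj (Eq x y) (gcodelt s n x y)))))"

definition gele :: "nat \<Rightarrow> nat \<Rightarrow> nat \<Rightarrow> nat \<Rightarrow> mso" where
  "gele s n x y = Ex1 n (Ex1 (n+1) (Ex1 (n+2) (Ex1 (n+3)
     (Conj (Rel n x) (Conj (Rel (n+1) x) (Conj (gvle s (n+4) n (n+1)) (Conj (Neg (Eq n (n+1)))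
     (Conj (Rel (n+2) y) (Conj (Rel (n+3) y) (Conj (gvle s (n+4) (n+2) (n+3)) (Conj (Neg (Eq (n+2) (n+3)))
       (Disj (Conj (gvle s (n+4) n (n+2)) (Neg (Eq n (n+2))))
             (Conj (Eq n (n+2)) (gvle s (n+4) (n+1) (n+3)))))))))))))))"

definition gtop :: "nat \<Rightarrow> mso" where
  "gtop s = Disj (Conj (Mem 0 0) (Conj (Mem 1 0) (gvle s 2 0 1)))
     (Disj (Conj (Mem 0 0) (Neg (Mem 1 0)))
       (Conj (Neg (Mem 0 0)) (Conj (Neg (Mem 1 0)) (gele s 2 0 1))))"

definition SUCCp where
  "SUCCp A R (\<beta>::nat \<Rightarrow> 'a set) u v \<longleftrightarrow> (\<exists>e\<in>A. (u,e)\<in>R \<and> (v,e)\<in>R \<and> e\<in>\<beta> 4 \<and>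
     ((u\<in>\<beta> 1 \<and> v\<in>\<beta> 2) \<or> (u\<in>\<beta> 2 \<and> v\<in>\<beta> 3) \<or> (u\<in>\<beta> 3 \<and> v\<in>\<beta> 1)))"

definition CHLE where
  "CHLE A R (\<beta>::nat \<Rightarrow> 'a set) x y \<longleftrightarrow> (\<forall>X. X \<subseteq> A \<longrightarrow> x\<in>X \<longrightarrow>
     (\<forall>u\<in>A. \<forall>v\<in>A. u\<in>X \<longrightarrow> SUCCp A R \<beta> u v \<longrightarrow> v\<in>X) \<longrightarrow> y\<in>X)"

definition EBIT where
  "EBIT A R (\<beta>::nat \<Rightarrow> 'a set) u w j \<longleftrightarrow> (\<exists>e\<in>A. (u,e)\<in>R \<and> (w,e)\<in>R \<and> e \<in> \<beta> (8+j))"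

definition CODELT where
  "CODELT A R (\<beta>::nat \<Rightarrow> 'a set) s x y \<longleftrightarrow>
    (\<exists>j<s. (\<forall>j'<j. x\<in>\<beta>(8+j') \<longleftrightarrow> y\<in>\<beta>(8+j')) \<and> x\<notin>\<beta>(8+j) \<and> y\<in>\<beta>(8+j)) \<or>
    ((\<forall>j<s. x\<in>\<beta>(8+j) \<longleftrightarrow> y\<in>\<beta>(8+j)) \<and>
     (\<exists>w\<in>A. w\<in>\<beta> 6 \<and>
        (\<forall>w'\<in>A. w'\<in>\<beta> 6 \<and> CHLE A R \<beta> w' w \<and> w' \<noteq> w \<longrightarrow>
            (\<forall>j<s. EBIT A R \<beta> x w' j \<longleftrightarrow> EBIT A R \<beta> y w' j)) \<and>
        (\<exists>j<s. (\<forall>j'<j. EBIT A R \<beta> x w j' \<longleftrightarrow> EBIT A R \<beta> y w j') \<and>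
               \<not> EBIT A R \<beta> x w j \<and> EBIT A R \<beta> y w j)))"

definition VLE where
  "VLE A R (\<beta>::nat \<Rightarrow> 'a set) s x y \<longleftrightarrow>
    (x\<notin>\<beta> 5 \<and> y\<notin>\<beta> 5 \<and> CHLE A R \<beta> x y) \<or> (x\<notin>\<beta> 5 \<and> y\<in>\<beta> 5) \<or>
    (x\<in>\<beta> 5 \<and> y\<in>\<beta> 5 \<and> (x = y \<or> CODELT A R \<beta> s x y))"

definition ELE where
  "ELE A R (\<beta>::nat \<Rightarrow> 'a set) s x y \<longleftrightarrow>
    (\<exists>a\<in>A. \<exists>b\<in>A. \<exists>c\<in>A. \<exists>d\<in>A. (a,x)\<in>R \<and> (b,x)\<in>R \<and> VLE A R \<beta> s a b \<and> a \<noteq> b \<and>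
       (c,y)\<in>R \<and> (d,y)\<in>R \<and> VLE A R \<beta> s c d \<and> c \<noteq> d \<and>
       ((VLE A R \<beta> s a c \<and> a \<noteq> c) \<or> (a = c \<and> VLE A R \<beta> s b d)))"

definition TOP where
  "TOP A R (\<beta>::nat \<Rightarrow> 'a set) s x y \<longleftrightarrow>
    (x\<in>\<beta> 0 \<and> y\<in>\<beta> 0 \<and> VLE A R \<beta> s x y) \<or> (x\<in>\<beta> 0 \<and> y\<notin>\<beta> 0) \<or>
    (x\<notin>\<beta> 0 \<and> y\<notin>\<beta> 0 \<and> ELE A R \<beta> s x y)"

lemma sat_gsucc[simp]: "x < n \<Longrightarrow> y < n \<Longrightarrow>
  sat A R \<alpha> \<beta> (gsucc n x y) = SUCCp A R \<beta> (\<alpha> x) (\<alpha> y)"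
  by (auto simp: gsucc_def colcond_def SUCCp_def)

lemma SUCCp_upd7[simp]: "SUCCp A R (\<beta>(7:=X)) = SUCCp A R \<beta>"
  by (simp add: SUCCp_def fun_eq_iff)

lemma sat_gchle[simp]: "x < n \<Longrightarrow> y < n \<Longrightarrow>
  sat A R \<alpha> \<beta> (gchle n x y) = CHLE A R \<beta> (\<alpha> x) (\<alpha> y)"
  by (simp add: gchle_def CHLE_def) blast

lemma sat_gebit[simp]: "x < n \<Longrightarrow> w < n \<Longrightarrow>
  sat A R \<alpha> \<beta> (gebit n x w j) = EBIT A R \<beta> (\<alpha> x) (\<alpha> w) j"
  by (auto simp: gebit_def EBIT_def)

lemma sat_glexlt[simp]: "sat A R \<alpha> \<beta> (glexlt s b x y) =
  (\<exists>j<s. (\<forall>j'<j. sat A R \<alpha> \<beta> (b j' x) \<longleftrightarrow> sat A R \<alpha> \<beta> (b j' y)) \<and>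
     \<not> sat A R \<alpha> \<beta> (b j x) \<and> sat A R \<alpha> \<beta> (b j y))"
  by (simp add: glexlt_def)

lemma sat_glexeq[simp]: "sat A R \<alpha> \<beta> (glexeq s b x y) =
  (\<forall>j<s. sat A R \<alpha> \<beta> (b j x) \<longleftrightarrow> sat A R \<alpha> \<beta> (b j y))"
  by (simp add: glexeq_def)

lemma sat_gcodelt[simp]: "x < n \<Longrightarrow> y < n \<Longrightarrow>
  sat A R \<alpha> \<beta> (gcodelt s n x y) = CODELT A R \<beta> s (\<alpha> x) (\<alpha> y)"
  by (simp add: gcodelt_def CODELT_def)

lemma sat_gvle[simp]: "x < n \<Longrightarrow> y < n \<Longrightarrow>
  sat A R \<alpha> \<beta> (gvle s n x y) = VLE A R \<beta> s (\<alpha> x) (\<alpha> y)"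
  by (simp add: gvle_def VLE_def)

lemma sat_gele[simp]: "x < n \<Longrightarrow> y < n \<Longrightarrow>
  sat A R \<alpha> \<beta> (gele s n x y) = ELE A R \<beta> s (\<alpha> x) (\<alpha> y)"
  by (simp add: gele_def ELE_def) 

lemma sat_gtop: "sat A R \<alpha> \<beta> (gtop s) = TOP A R \<beta> s (\<alpha> 0) (\<alpha> 1)"
  by (simp add: gtop_def TOP_def)

lemma fvars_BigOr_eq[simp]: "fvars (BigOr n f) = insert 0 (\<Union>j<n. fvars (f j))"
  by (induction n) (auto simp: lessThan_Suc)
lemma svars_BigOr_eq[simp]: "svars (BigOr n f) = (\<Union>j<n. svars (f j))"
  by (induction n) (auto simp: lessThan_Suc)
lemma fvars_BigAnd_eq[simp]: "fvars (BigAnd n f) = insert 0 (\<Union>j<n. fvars (f j))"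
  by (simp add: BigAnd_def)
lemma svars_BigAnd_eq[simp]: "svars (BigAnd n f) = (\<Union>j<n. svars (f j))"
  by (simp add: BigAnd_def)

lemma vars_gtop: "fvars (gtop s) \<subseteq> {0,1} \<and> svars (gtop s) \<subseteq> {..<8+s}"
  by (auto simp: gtop_def gele_def gvle_def gcodelt_def glexlt_def glexeq_def gebit_def gchle_def gsucc_def colcond_def)

lemma ham_aux:
  "finite V \<Longrightarrow> card V = N \<Longrightarrow> (\<forall>p. 2 * card {v\<in>V. f v = p} \<le> card V + 1) \<Longrightarrow>
   2 * card {v\<in>V. f v = q} \<le> card V \<Longrightarrow>
   \<exists>xs. distinct xs \<and> set xs = V \<and> (\<forall>i. Suc i < length xs \<longrightarrow> f (xs!i) \<noteq> f (xs!Suc i))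
     \<and> (xs \<noteq> [] \<longrightarrow> f (hd xs) \<noteq> q)"
proof (induction N arbitrary: V q)
  case 0
  then show ?case by (intro exI[of _ "[]"]) auto
next
  case (Suc N)
  define cnt where "cnt p = card {v\<in>V. f v = p}" for p
  have fin: "\<And>p. finite {v\<in>V. f v = p}" using Suc.prems(1) by auto
  have "\<exists>v\<in>V. f v \<noteq> q"
  proof (rule ccontr)
    assume "\<not> ?thesis"
    then have "{v\<in>V. f v = q} = V" by auto
    then show False using Suc.prems by auto
  qed
  define F where "F = f ` V - {q}"
  have Fne: "F \<noteq> {}" "finite F" using \<open>\<exists>v\<in>V. f v \<noteq> q\<close> Suc.prems(1) by (auto simp: F_def)
  obtain p where pF: "p \<in> F" and pmax: "\<And>p'. p' \<in> F \<Longrightarrow> cnt p' \<le> cnt p"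
  proof -
    define m where "m = Max (cnt ` F)"
    have "m \<in> cnt ` F" using Fne by (simp add: m_def)
    then obtain p where "p \<in> F" "cnt p = m" by auto
    moreover have "\<And>p'. p' \<in> F \<Longrightarrow> cnt p' \<le> m" using Fne by (simp add: m_def)
    ultimately show ?thesis using that by auto
  qed
  obtain x where xV: "x \<in> V" and fx: "f x = p" using pF by (auto simp: F_def)
  define V' where "V' = V - {x}"
  have cV': "card V' = N" using Suc.prems xV by (simp add: V'_def)
  have cnt': "card {v\<in>V'. f v = p'} = cnt p' - (if p' = p then 1 else 0)" for p'
  proof -
    have "{v\<in>V'. f v = p'} = {v\<in>V. f v = p'} - (if p' = p then {x} else {})"
      using fx by (auto simp: V'_def)
    then show ?thesis using fin xV fx by (cases "p' = p") (auto simp: cnt_def)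
  qed
  have sumle: "cnt p + cnt p' \<le> card V" if "p' \<noteq> p" for p'
  proof -
    have "cnt p + cnt p' = card ({v\<in>V. f v = p} \<union> {v\<in>V. f v = p'})"
      using that fin by (subst card_Un_disjoint) (auto simp: cnt_def)
    also have "\<dots> \<le> card V" using Suc.prems(1) by (intro card_mono) auto
    finally show ?thesis .
  qed
  have h1: "\<forall>p'. 2 * card {v\<in>V'. f v = p'} \<le> card V' + 1"
  proof
    fix p'
    show "2 * card {v\<in>V'. f v = p'} \<le> card V' + 1"
    proof (cases "p' = p")
      case True
      have a: "card {v\<in>V'. f v = p'} = cnt p - 1" using cnt'[of p'] True by simp
      have b: "2 * cnt p \<le> card V + 1" using Suc.prems(3) by (simp add: cnt_def)
      show ?thesis using a b Suc.prems(2) cV' by linarith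
    next
      case False
      have "2 * cnt p' \<le> card V"
      proof (cases "p' = q")
        case True then show ?thesis using Suc.prems(4) by (simp add: cnt_def)
      next
        case False2: False
        show ?thesis
        proof (cases "p' \<in> F")
          case True
          then show ?thesis using pmax[OF True] sumle[OF False] by linarith
        next
          case False3: False
          then have "{v\<in>V. f v = p'} = {}" using False2 by (auto simp: F_def)
          then have "cnt p' = 0" unfolding cnt_def by (metis card.empty)
          then show ?thesis by simp
        qed
      qed
      have a: "card {v\<in>V'. f v = p'} = cnt p'" using cnt'[of p'] False by simp
      show ?thesis using a \<open>2 * cnt p' \<le> card V\<close> Suc.prems(2) cV' by linarith
    qed
  qed
  have h2: "2 * card {v\<in>V'. f v = p} \<le> card V'"
  proof -
    have a: "card {v\<in>V'. f v = p} = cnt p - 1" using cnt'[of p] by simp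
    have b: "2 * cnt p \<le> card V + 1" using Suc.prems(3) by (simp add: cnt_def)
    have c: "cnt p \<ge> 1" unfolding cnt_def using fx xV fin[of p]
      by (metis (mono_tags, lifting) One_nat_def Suc_leI card_gt_0_iff empty_iff mem_Collect_eq)
    show ?thesis using a b c Suc.prems(2) cV' by linarith
  qed
  have "finite V'" using Suc.prems(1) by (simp add: V'_def)
  from Suc.IH[OF this cV' h1 h2] obtain xs where xs: "distinct xs" "set xs = V'"
     "\<forall>i. Suc i < length xs \<longrightarrow> f (xs!i) \<noteq> f (xs!Suc i)" "xs \<noteq> [] \<longrightarrow> f (hd xs) \<noteq> p"
    by blast
  show ?case
  proof (intro exI[of _ "x # xs"] conjI)
    show "distinct (x # xs)" using xs by (auto simp: V'_def)
    show "set (x # xs) = V" using xs xV by (auto simp: V'_def)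
    show "\<forall>i. Suc i < length (x # xs) \<longrightarrow> f ((x # xs) ! i) \<noteq> f ((x # xs) ! Suc i)"
    proof (intro allI impI)
      fix i assume "Suc i < length (x # xs)"
      then show "f ((x # xs) ! i) \<noteq> f ((x # xs) ! Suc i)"
      proof (cases i)
        case 0
        then have "xs \<noteq> []" using \<open>Suc i < length (x # xs)\<close> by auto
        then show ?thesis using 0 xs(4) fx by (simp add: hd_conv_nth)
      next
        case (Suc k)
        then show ?thesis using xs(3) \<open>Suc i < length (x # xs)\<close> by simp
      qed
    qed
    show "x # xs \<noteq> [] \<longrightarrow> f (hd (x # xs)) \<noteq> q" using fx pF by (auto simp: F_def)
  qed
qed


lemma ham:
  fixes f :: "'a \<Rightarrow> nat"
  assumes "finite V" "\<forall>p. 2 * card {v\<in>V. f v = p} \<le> card V + 1"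
  shows "\<exists>xs. distinct xs \<and> set xs = V \<and> (\<forall>i. Suc i < length xs \<longrightarrow> f (xs!i) \<noteq> f (xs!Suc i))"
proof -
  obtain q where "q \<notin> f ` V"
    using ex_new_if_finite[OF infinite_UNIV_nat finite_imageI[OF assms(1), of f]] by blast
  then have "{v\<in>V. f v = q} = {}" by auto
  then have "card {v\<in>V. f v = q} = 0" by (metis card.empty)
  then show ?thesis using ham_aux[OF assms(1) refl assms(2), of q] by auto
qed

lemma list_less_nth:
  fixes xs ys :: "'a::linorder list"
  assumes "length xs = length ys"
  shows "xs < ys \<longleftrightarrow> (\<exists>i<length xs. (\<forall>i'<i. xs!i' = ys!i') \<and> xs!i < ys!i)"
  using assms
proof (induction xs arbitrary: ys)
  case Nil then show ?case by simp
next
  case (Cons a xs)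
  then obtain b ys' where ys: "ys = b # ys'" by (cases ys) auto
  show ?case
  proof
    assume "a # xs < ys"
    then consider "a < b" | "a = b" "xs < ys'" using ys by auto
    then show "\<exists>i<length (a # xs). (\<forall>i'<i. (a # xs) ! i' = ys ! i') \<and> (a # xs) ! i < ys ! i"
    proof cases
      case 1 then show ?thesis using ys by (intro exI[of _ 0]) auto
    next
      case 2
      then obtain i where "i < length xs" "\<forall>i'<i. xs!i' = ys'!i'" "xs!i < ys'!i"
        using Cons ys by auto
      then show ?thesis using 2 ys by (intro exI[of _ "Suc i"]) (auto simp: less_Suc_eq_0_disj)
    qed
  next
    assume "\<exists>i<length (a # xs). (\<forall>i'<i. (a # xs) ! i' = ys ! i') \<and> (a # xs) ! i < ys ! i"
    then obtain i where i: "i < length (a # xs)" "\<forall>i'<i. (a # xs) ! i' = ys ! i'" "(a # xs) ! i < ys ! i"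
      by blast
    show "a # xs < ys"
    proof (cases i)
      case 0 then show ?thesis using i ys by auto
    next
      case (Suc k)
      have "a = b" using i(2) Suc ys by auto
      moreover have "xs < ys'"
        using Cons.IH[of ys'] Cons.prems ys i Suc by (auto intro!: exI[of _ k])
      ultimately show ?thesis using ys by auto
    qed
  qed
qed

lemma linear_order_key:
  fixes key :: "'a \<Rightarrow> 'b::linorder"
  assumes inj: "inj_on key A"
  shows "linear_order_on A {(a,b). a\<in>A \<and> b\<in>A \<and> key a \<le> key b}"
proof -
  let ?r = "{(a,b). a\<in>A \<and> b\<in>A \<and> key a \<le> key b}"
  have "refl_on A ?r" by (auto simp: refl_on_def)
  moreover have "trans ?r" by (auto simp: trans_def)
  moreover have "antisym ?r" using inj by (auto simp: antisym_def inj_on_def)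
  moreover have "total_on A ?r" by (auto simp: total_on_def)
  moreover have "?r \<subseteq> A \<times> A" by auto
  ultimately show ?thesis
    by (simp add: linear_order_on_def partial_order_on_def preorder_on_def)
qed

locale cmg =
  fixes G :: "'v graph" and d :: nat and P :: "nat \<Rightarrow> 'v set"
  assumes fg: "finite_graph G" and cm: "complete_multipartite G d P"
begin

abbreviation "V \<equiv> fst G"
abbreviation "E \<equiv> snd G"

lemma disj: "i < d \<Longrightarrow> j < d \<Longrightarrow> i \<noteq> j \<Longrightarrow> P i \<inter> P j = {}"
  using cm by (auto simp: complete_multipartite_def)
lemma V_eq: "V = (\<Union>i<d. P i)"
  using cm by (auto simp: complete_multipartite_def)
lemma E_eq: "E = {{u, v} | u v i j. i < d \<and> j < d \<and> i \<noteq> j \<and> u \<in> P i \<and> v \<in> P j}"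
  using cm by (auto simp: complete_multipartite_def)
lemma finV: "finite V" using fg by (simp add: finite_graph_def)
lemma P_sub: "i < d \<Longrightarrow> P i \<subseteq> V" using V_eq by auto
lemma finP: "i < d \<Longrightarrow> finite (P i)" using P_sub finV finite_subset by blast
lemma E_sub: "e \<in> E \<Longrightarrow> e \<subseteq> V" using fg by (simp add: finite_graph_def)

definition pf :: "'v \<Rightarrow> nat" where "pf v = (THE i. i < d \<and> v \<in> P i)"

lemma pf_eq: "i < d \<Longrightarrow> v \<in> P i \<Longrightarrow> pf v = i"
  unfolding pf_def
proof (rule the_equality)
  assume "i < d" "v \<in> P i"
  then show "i < d \<and> v \<in> P i" by simp
  fix j assume "j < d \<and> v \<in> P j"
  then show "j = i" using disj[of i j] \<open>i < d\<close> \<open>v \<in> P i\<close> by blast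
qed

lemma pf_prop: "v \<in> V \<Longrightarrow> pf v < d \<and> v \<in> P (pf v)"
  using V_eq pf_eq by auto

lemma edge_iff: "a \<in> V \<Longrightarrow> b \<in> V \<Longrightarrow> {a,b} \<in> E \<longleftrightarrow> pf a \<noteq> pf b"
proof
  assume "{a,b} \<in> E"
  then obtain u v i j where "{a,b} = {u,v}" "i<d" "j<d" "i\<noteq>j" "u\<in>P i" "v\<in>P j"
    using E_eq by auto
  then show "pf a \<noteq> pf b" using pf_eq by (auto simp: doubleton_eq_iff)
next
  assume "a \<in> V" "b \<in> V" "pf a \<noteq> pf b"
  then have "\<exists>u v i j. {a,b} = {u,v} \<and> i < d \<and> j < d \<and> i \<noteq> j \<and> u \<in> P i \<and> v \<in> P j"
    using pf_prop by (intro exI[of _ a] exI[of _ b] exI[of _ "pf a"] exI[of _ "pf b"]) auto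
  then show "{a,b} \<in> E" using E_eq by simp
qed

lemma edge_form: "e \<in> E \<Longrightarrow> \<exists>a b. e = {a,b} \<and> a \<in> V \<and> b \<in> V \<and> pf a \<noteq> pf b"
proof -
  assume "e \<in> E"
  then obtain u v i j where "e = {u,v}" "i<d" "j<d" "i\<noteq>j" "u\<in>P i" "v\<in>P j"
    using E_eq by auto
  then show ?thesis using pf_eq P_sub by (intro exI[of _ u] exI[of _ v]) auto
qed

lemma card_V: "card V = part_sum d P"
proof -
  have "card V = card (\<Union>i<d. P i)" using V_eq by simp
  also have "\<dots> = (\<Sum>i<d. card (P i))"
    by (rule card_UN_disjoint) (auto simp: finP disj)
  finally show ?thesis by (simp add: part_sum_def)
qed

lemma part_le_max: "i < d \<Longrightarrow> card (P i) \<le> part_max d P"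
  unfolding part_max_def by (intro Max_ge) auto

lemma part_max_attained: "part_max d P > 0 \<Longrightarrow> \<exists>i<d. card (P i) = part_max d P"
proof -
  assume "part_max d P > 0"
  have "part_max d P \<in> insert 0 ((\<lambda>i. card (P i)) ` {..<d})"
    unfolding part_max_def by (intro Max_in) auto
  then show ?thesis using \<open>part_max d P > 0\<close> by auto
qed

lemma V_empty_max: "V \<noteq> {} \<Longrightarrow> part_max d P > 0"
proof -
  assume "V \<noteq> {}"
  then obtain v where "v \<in> V" by auto
  then have "card (P (pf v)) > 0" using pf_prop finP card_gt_0_iff by blast
  then show ?thesis using part_le_max pf_prop \<open>v \<in> V\<close> by (meson less_le_trans)
qed

end

locale constr = cmg G d P for G :: "'v graph" and d P +
  fixes s :: nat
  assumes bound: "part_max d P \<le> 2 ^ (s * (part_sum d P - part_max d P + 1))"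
    and Vne: "fst G \<noteq> {}"
begin

definition i0 where "i0 = (SOME i. i < d \<and> card (P i) = part_max d P)"
lemma i0: "i0 < d" "card (P i0) = part_max d P"
  using someI_ex[OF part_max_attained[OF V_empty_max[OF Vne]]] by (auto simp: i0_def)

definition "B = P i0"
definition "R = V - B"
definition "r = card R"

lemma B_sub: "B \<subseteq> V" using P_sub i0 by (simp add: B_def)
lemma finB: "finite B" using finP i0 by (simp add: B_def)
lemma finR: "finite R" using finV by (simp add: R_def)
lemma pf_B: "v \<in> B \<Longrightarrow> pf v = i0" using pf_eq i0 by (simp add: B_def)
lemma pf_R: "v \<in> R \<Longrightarrow> pf v \<noteq> i0" by (metis DiffE R_def B_def pf_prop)
lemma card_R: "r = part_sum d P - part_max d P"
  using card_Diff_subset[OF finB B_sub] card_V i0 by (simp add: r_def R_def B_def)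

definition B0 where "B0 = (SOME X. X \<subseteq> B \<and> card X = min (card B) (Suc r))"
lemma B0: "B0 \<subseteq> B" "card B0 = min (card B) (Suc r)"
proof -
  have "\<exists>X. X \<subseteq> B \<and> card X = min (card B) (Suc r)"
    by (meson min.cobounded1 obtain_subset_with_card_n)
  from someI_ex[OF this] show "B0 \<subseteq> B" "card B0 = min (card B) (Suc r)" by (auto simp: B0_def)
qed

definition "B1 = B - B0"
definition "V0 = R \<union> B0"

lemma finV0: "finite V0" using finR B0 finB finite_subset by (auto simp: V0_def)
lemma V0_sub: "V0 \<subseteq> V" using B0 B_sub by (auto simp: V0_def R_def)
lemma V_split: "V = V0 \<union> B1" "V0 \<inter> B1 = {}"
  using B0 B_sub by (auto simp: V0_def B1_def R_def)
lemma B1_sub: "B1 \<subseteq> B" by (auto simp: B1_def)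

lemma card_V0: "card V0 = r + card B0"
  unfolding V0_def r_def
  by (rule card_Un_disjoint) (use finR B0 finB finite_subset in \<open>auto simp: R_def\<close>)

lemma ham_cond: "\<forall>p. 2 * card {v\<in>V0. pf v = p} \<le> card V0 + 1"
proof
  fix p
  show "2 * card {v\<in>V0. pf v = p} \<le> card V0 + 1"
  proof (cases "p = i0")
    case True
    then have "{v\<in>V0. pf v = p} = B0" using pf_B pf_R B0 by (auto simp: V0_def)
    then show ?thesis using B0 card_V0 by auto
  next
    case False
    then have eq: "{v\<in>V0. pf v = p} = {v\<in>R. pf v = p}" using pf_B B0 by (auto simp: V0_def)
    have c1: "card {v\<in>R. pf v = p} \<le> r" unfolding r_def by (rule card_mono[OF finR]) auto
    have c2: "card {v\<in>R. pf v = p} \<le> card B"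
    proof (cases "p < d")
      case True
      have "card {v\<in>R. pf v = p} \<le> card (P p)"
        using True finP pf_prop by (intro card_mono) (auto simp: R_def)
      also have "\<dots> \<le> card B" using part_le_max[OF True] i0 by (simp add: B_def)
      finally show ?thesis .
    next
      case False
      then have "{v\<in>R. pf v = p} = {}" using pf_prop by (auto simp: R_def)
      then show ?thesis by (metis card.empty le0)
    qed
    show ?thesis using eq c1 c2 card_V0 B0(2) by auto
  qed
qed

definition xs where "xs = (SOME xs. distinct xs \<and> set xs = V0 \<and> (\<forall>i. Suc i < length xs \<longrightarrow> pf (xs!i) \<noteq> pf (xs!Suc i)))"
lemma xs: "distinct xs" "set xs = V0" "\<And>i. Suc i < length xs \<Longrightarrow> pf (xs!i) \<noteq> pf (xs!Suc i)"
  using someI_ex[OF ham[OF finV0 ham_cond]] unfolding xs_def by auto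

definition "n0 = length xs"

lemma xs_V: "m < n0 \<Longrightarrow> xs!m \<in> V" using xs V0_sub by (auto simp: n0_def)
lemma xs_inj: "m < n0 \<Longrightarrow> m' < n0 \<Longrightarrow> xs!m = xs!m' \<longleftrightarrow> m = m'"
  using xs(1) by (simp add: n0_def nth_eq_iff_index_eq)
lemma V0_xs: "v \<in> V0 \<Longrightarrow> \<exists>m<n0. v = xs!m" by (metis in_set_conv_nth xs(2) n0_def)
lemma xs_edge: "Suc m < n0 \<Longrightarrow> {xs!m, xs!Suc m} \<in> E"
  using xs(3) xs_V edge_iff by (simp add: n0_def)

abbreviation "BL \<equiv> {bs :: bool list. length bs = s}"
abbreviation "POS \<equiv> insert None (Some ` R)"

lemma card_BL: "card BL = 2 ^ s"
  using card_lists_length_eq[of "UNIV :: bool set" s] by simp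

lemma card_PiE_code: "card (PiE POS (\<lambda>_. BL)) = 2 ^ (s * Suc r)"
proof -
  have "card POS = Suc r" using finR by (simp add: card_image r_def)
  then have "card (PiE POS (\<lambda>_. BL)) = (2 ^ s) ^ Suc r" using finR card_BL by (simp add: card_PiE)
  then show ?thesis by (metis power_mult)
qed

lemma fin_BL: "finite BL"
  using finite_lists_length_eq[of "UNIV :: bool set" s] by simp

definition cc where "cc = (SOME c. c ` B1 \<subseteq> PiE POS (\<lambda>_. BL) \<and> inj_on c B1)"
lemma cc: "cc ` B1 \<subseteq> PiE POS (\<lambda>_. BL)" "inj_on cc B1"
proof -
  have "card B1 \<le> card B" using finB by (intro card_mono) (auto simp: B1_def)
  also have "\<dots> \<le> 2 ^ (s * Suc r)" using bound i0 card_R by (simp add: B_def)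
  finally have "card B1 \<le> card (PiE POS (\<lambda>_. BL))" using card_PiE_code by simp
  moreover have "finite (PiE POS (\<lambda>_. BL))" using finR fin_BL by (intro finite_PiE) auto
  moreover have "finite B1" using finB by (simp add: B1_def)
  ultimately have "\<exists>c. c ` B1 \<subseteq> PiE POS (\<lambda>_. BL) \<and> inj_on c B1"
    using card_le_inj by blast
  from someI_ex[OF this] show "cc ` B1 \<subseteq> PiE POS (\<lambda>_. BL)" "inj_on cc B1" by (auto simp: cc_def)
qed

definition Zs :: "nat \<Rightarrow> ('v + 'v set) set" where
  "Zs j = Inl ` {u\<in>B1. cc u None ! j} \<union> Inr ` {{u,w} | u w. u \<in> B1 \<and> w \<in> R \<and> cc u (Some w) ! j}"

definition bb :: "nat \<Rightarrow> ('v + 'v set) set" where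
  "bb i = (if i = 0 then Inl ` V
    else if i = 1 then Inl ` {xs!m | m. m < n0 \<and> m mod 3 = 0}
    else if i = 2 then Inl ` {xs!m | m. m < n0 \<and> m mod 3 = 1}
    else if i = 3 then Inl ` {xs!m | m. m < n0 \<and> m mod 3 = 2}
    else if i = 4 then {Inr {xs!m, xs!Suc m} | m. Suc m < n0}
    else if i = 5 then Inl ` B1
    else if i = 6 then Inl ` V0
    else if 8 \<le> i \<and> i < 8 + s then Zs (i - 8)
    else {})"

abbreviation "AA \<equiv> fst (inc_structure G)"
abbreviation "RR \<equiv> snd (inc_structure G)"

lemma AA_eq: "AA = Inl ` V \<union> Inr ` E" by (simp add: inc_structure_def)
lemma RR_iff: "(x, y) \<in> RR \<longleftrightarrow> (\<exists>v e. x = Inl v \<and> y = Inr e \<and> v \<in> V \<and> e \<in> E \<and> v \<in> e)"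
  by (auto simp: inc_structure_def)

lemma bb_trunc: "(\<lambda>i. if i < 8 + s then bb i else {}) = bb"
  by (auto simp: bb_def fun_eq_iff)

lemma bb_sub: "bb i \<subseteq> AA"
proof -
  have "Zs j \<subseteq> AA" for j
  proof -
    have "{u, w} \<in> E" if "u \<in> B1" "w \<in> R" for u w
    proof -
      have "pf u \<noteq> pf w" using that pf_B[of u] pf_R[of w] B1_sub by auto
      moreover have "u \<in> V" "w \<in> V" using that B1_sub B_sub by (auto simp: R_def)
      ultimately show ?thesis using edge_iff by simp
    qed
    then show ?thesis using B1_sub B_sub by (auto simp: Zs_def AA_eq)
  qed
  then show ?thesis using xs_V xs_edge V0_sub B1_sub B_sub by (auto simp: bb_def AA_eq)
qed

end

context constr begin

definition colrel :: "nat \<Rightarrow> nat \<Rightarrow> bool" where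
  "colrel m1 m2 \<longleftrightarrow> (m1 mod 3 = 0 \<and> m2 mod 3 = 1) \<or> (m1 mod 3 = 1 \<and> m2 mod 3 = 2) \<or> (m1 mod 3 = 2 \<and> m2 mod 3 = 0)"

definition colset :: "nat \<Rightarrow> 'v set" where "colset c = {xs!m | m. m < n0 \<and> m mod 3 = c}"

lemma colset_iff: "x \<in> Inl ` colset c \<longleftrightarrow> (\<exists>m. m < n0 \<and> x = Inl (xs!m) \<and> m mod 3 = c)"
  by (auto simp: colset_def)

lemma bb123: "bb 1 = Inl ` colset 0" "bb 2 = Inl ` colset 1" "bb 3 = Inl ` colset 2" "bb (Suc 0) = Inl ` colset 0"
  by (simp_all add: bb_def colset_def)

lemma col_aux: "x \<in> Inl ` colset c1 \<Longrightarrow> y \<in> Inl ` colset c2 \<Longrightarrow>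
  (c1 = 0 \<and> c2 = 1) \<or> (c1 = 1 \<and> c2 = 2) \<or> (c1 = 2 \<and> c2 = 0) \<Longrightarrow>
  \<exists>m1 m2. m1 < n0 \<and> m2 < n0 \<and> x = Inl (xs!m1) \<and> y = Inl (xs!m2) \<and> colrel m1 m2"
proof -
  assume x: "x \<in> Inl ` colset c1" and y: "y \<in> Inl ` colset c2" and c: "(c1 = 0 \<and> c2 = 1) \<or> (c1 = 1 \<and> c2 = 2) \<or> (c1 = 2 \<and> c2 = 0)"
  from x obtain m1 where "m1 < n0" "x = Inl (xs!m1)" "m1 mod 3 = c1"
    unfolding colset_iff by blast
  moreover from y obtain m2 where "m2 < n0" "y = Inl (xs!m2)" "m2 mod 3 = c2"
    unfolding colset_iff by blast
  moreover have "colrel m1 m2" unfolding colrel_def using c \<open>m1 mod 3 = c1\<close> \<open>m2 mod 3 = c2\<close> by simp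
  ultimately show ?thesis by blast
qed

lemma col_iff: "((x \<in> bb 1 \<and> y \<in> bb 2) \<or> (x \<in> bb 2 \<and> y \<in> bb 3) \<or> (x \<in> bb 3 \<and> y \<in> bb 1)) \<longleftrightarrow>
  (\<exists>m1 m2. m1 < n0 \<and> m2 < n0 \<and> x = Inl (xs!m1) \<and> y = Inl (xs!m2) \<and> colrel m1 m2)"
proof
  assume "(x \<in> bb 1 \<and> y \<in> bb 2) \<or> (x \<in> bb 2 \<and> y \<in> bb 3) \<or> (x \<in> bb 3 \<and> y \<in> bb 1)"
  then show "\<exists>m1 m2. m1 < n0 \<and> m2 < n0 \<and> x = Inl (xs!m1) \<and> y = Inl (xs!m2) \<and> colrel m1 m2"
    unfolding bb123
  proof (elim disjE conjE)
    assume "x \<in> Inl ` colset 0" "y \<in> Inl ` colset 1" then show ?thesis by (rule col_aux) simp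
  next
    assume "x \<in> Inl ` colset 1" "y \<in> Inl ` colset 2" then show ?thesis by (rule col_aux) simp
  next
    assume "x \<in> Inl ` colset 2" "y \<in> Inl ` colset 0" then show ?thesis by (rule col_aux) simp
  qed
next
  assume "\<exists>m1 m2. m1 < n0 \<and> m2 < n0 \<and> x = Inl (xs!m1) \<and> y = Inl (xs!m2) \<and> colrel m1 m2"
  then obtain m1 m2 where m: "m1 < n0" "m2 < n0" "x = Inl (xs!m1)" "y = Inl (xs!m2)" and cr: "colrel m1 m2" by blast
  have x: "x \<in> Inl ` colset (m1 mod 3)" unfolding colset_iff using m by blast
  have y: "y \<in> Inl ` colset (m2 mod 3)" unfolding colset_iff using m by blast
  show "(x \<in> bb 1 \<and> y \<in> bb 2) \<or> (x \<in> bb 2 \<and> y \<in> bb 3) \<or> (x \<in> bb 3 \<and> y \<in> bb 1)"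
    using cr unfolding colrel_def
  proof (elim disjE conjE)
    assume "m1 mod 3 = 0" "m2 mod 3 = 1" then show ?thesis using x y by (simp add: bb123)
  next
    assume "m1 mod 3 = 1" "m2 mod 3 = 2" then show ?thesis using x y by (simp add: bb123)
  next
    assume "m1 mod 3 = 2" "m2 mod 3 = 0" then show ?thesis using x y by (simp add: bb123)
  qed
qed

lemma colrel_arith: "m1 \<in> {m, Suc m} \<Longrightarrow> m2 \<in> {m, Suc m} \<Longrightarrow> colrel m1 m2 \<Longrightarrow> m1 = m \<and> m2 = Suc m"
  unfolding colrel_def by auto presburger+

lemma SUCC_iff: "SUCCp AA RR bb u v \<longleftrightarrow> (\<exists>m. Suc m < n0 \<and> u = Inl (xs!m) \<and> v = Inl (xs!Suc m))"
proof
  assume "SUCCp AA RR bb u v"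
  then obtain e where e: "(u,e) \<in> RR" "(v,e) \<in> RR" "e \<in> bb 4"
    and col: "(u\<in>bb 1 \<and> v\<in>bb 2) \<or> (u\<in>bb 2 \<and> v\<in>bb 3) \<or> (u\<in>bb 3 \<and> v\<in>bb 1)"
    unfolding SUCCp_def by blast
  from e(3) obtain m where m: "Suc m < n0" "e = Inr {xs!m, xs!Suc m}" by (auto simp: bb_def)
  from col obtain m1 m2 where mm: "m1 < n0" "m2 < n0" "u = Inl (xs!m1)" "v = Inl (xs!m2)" "colrel m1 m2"
    using col_iff by blast
  have "xs!m1 \<in> {xs!m, xs!Suc m}" "xs!m2 \<in> {xs!m, xs!Suc m}"
    using e(1,2) m(2) mm RR_iff by auto
  then have "m1 \<in> {m, Suc m}" "m2 \<in> {m, Suc m}" using xs_inj mm m by auto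
  then have "m1 = m \<and> m2 = Suc m" using colrel_arith mm(5) by blast
  then show "\<exists>m. Suc m < n0 \<and> u = Inl (xs!m) \<and> v = Inl (xs!Suc m)" using mm m by blast
next
  assume "\<exists>m. Suc m < n0 \<and> u = Inl (xs!m) \<and> v = Inl (xs!Suc m)"
  then obtain m where m: "Suc m < n0" "u = Inl (xs!m)" "v = Inl (xs!Suc m)" by blast
  let ?e = "Inr {xs!m, xs!Suc m} :: 'v + 'v set"
  have eA: "?e \<in> AA" using xs_edge m(1) AA_eq by auto
  have "(u, ?e) \<in> RR" "(v, ?e) \<in> RR" using m xs_edge xs_V RR_iff by auto
  moreover have "?e \<in> bb 4" using m(1) by (auto simp: bb_def)
  moreover have "colrel m (Suc m)" unfolding colrel_def by presburger
  then have "\<exists>m1 m2. m1 < n0 \<and> m2 < n0 \<and> u = Inl (xs!m1) \<and> v = Inl (xs!m2) \<and> colrel m1 m2"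
    using m by (intro exI[of _ m] exI[of _ "Suc m"]) auto
  then have "(u\<in>bb 1 \<and> v\<in>bb 2) \<or> (u\<in>bb 2 \<and> v\<in>bb 3) \<or> (u\<in>bb 3 \<and> v\<in>bb 1)"
    using col_iff by blast
  ultimately show "SUCCp AA RR bb u v" using eA unfolding SUCCp_def by blast
qed

lemma CHLE_iff: "m < n0 \<Longrightarrow> CHLE AA RR bb (Inl (xs!m)) y \<longleftrightarrow> (\<exists>m'. m \<le> m' \<and> m' < n0 \<and> y = Inl (xs!m'))"
proof
  assume m: "m < n0" and ch: "CHLE AA RR bb (Inl (xs!m)) y"
  let ?X = "{Inl (xs!m') | m'. m \<le> m' \<and> m' < n0} :: ('v + 'v set) set"
  have "?X \<subseteq> AA" using xs_V AA_eq by auto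
  moreover have "Inl (xs!m) \<in> ?X" using m by auto
  moreover have "\<forall>u\<in>AA. \<forall>v\<in>AA. u \<in> ?X \<longrightarrow> SUCCp AA RR bb u v \<longrightarrow> v \<in> ?X"
  proof (intro ballI impI)
    fix u v assume "u \<in> ?X" "SUCCp AA RR bb u v"
    then obtain k m' where "Suc k < n0" "u = Inl (xs!k)" "v = Inl (xs!Suc k)" "m \<le> m'" "m' < n0" "u = Inl (xs!m')"
      using SUCC_iff by auto
    then have "k = m'" using xs_inj by auto
    then show "v \<in> ?X" using \<open>Suc k < n0\<close> \<open>v = _\<close> \<open>m \<le> m'\<close> by auto
  qed
  ultimately have "y \<in> ?X" using ch unfolding CHLE_def by blast
  then show "\<exists>m'. m \<le> m' \<and> m' < n0 \<and> y = Inl (xs!m')" by auto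
next
  assume m: "m < n0" and "\<exists>m'. m \<le> m' \<and> m' < n0 \<and> y = Inl (xs!m')"
  then obtain m' where m': "m \<le> m'" "m' < n0" "y = Inl (xs!m')" by blast
  show "CHLE AA RR bb (Inl (xs!m)) y" unfolding CHLE_def
  proof (intro allI impI)
    fix X assume X: "X \<subseteq> AA" "Inl (xs!m) \<in> X" "\<forall>u\<in>AA. \<forall>v\<in>AA. u \<in> X \<longrightarrow> SUCCp AA RR bb u v \<longrightarrow> v \<in> X"
    have "m + k < n0 \<longrightarrow> Inl (xs!(m+k)) \<in> X" for k
    proof (induction k)
      case 0 then show ?case using X by simp
    next
      case (Suc k)
      show ?case
      proof
        assume lt: "m + Suc k < n0"
        then have "Inl (xs!(m+k)) \<in> X" using Suc by simp
        moreover have "SUCCp AA RR bb (Inl (xs!(m+k))) (Inl (xs!Suc (m+k)))"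
          using SUCC_iff lt by auto
        moreover have "Inl (xs!Suc (m+k)) \<in> AA" using xs_V lt AA_eq by auto
        ultimately show "Inl (xs!(m + Suc k)) \<in> X" using X(1,3) by auto
      qed
    qed
    from this[of "m' - m"] show "y \<in> X" using m' by simp
  qed
qed

end

context constr begin

lemma bb8: "j < s \<Longrightarrow> bb (8+j) = Zs j" by (simp add: bb_def)
lemma bb5: "bb 5 = Inl ` B1" by (simp add: bb_def)
lemma bb6: "bb 6 = Inl ` V0" by (simp add: bb_def)
lemma bb0: "bb 0 = Inl ` V" by (simp add: bb_def)

lemma B1_R: "u \<in> B1 \<Longrightarrow> u \<notin> R" using B1_sub by (auto simp: R_def)
lemma B1_V0: "u \<in> B1 \<Longrightarrow> u \<notin> V0" using V_split by auto
lemma R_V0: "R \<subseteq> V0" by (auto simp: V0_def)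

lemma edge_B1_R: "u \<in> B1 \<Longrightarrow> w \<in> R \<Longrightarrow> {u,w} \<in> E"
proof -
  assume "u \<in> B1" "w \<in> R"
  then have "pf u \<noteq> pf w" using pf_B[of u] pf_R[of w] B1_sub by auto
  moreover have "u \<in> V" "w \<in> V" using \<open>u \<in> B1\<close> \<open>w \<in> R\<close> B1_sub B_sub by (auto simp: R_def)
  ultimately show ?thesis using edge_iff by simp
qed

lemma selfbit: "j < s \<Longrightarrow> Inl u \<in> bb (8+j) \<longleftrightarrow> u \<in> B1 \<and> cc u None ! j"
  by (auto simp: bb8 Zs_def)

lemma ebit: assumes "u \<in> B1" "w \<in> V0" "j < s"
  shows "EBIT AA RR bb (Inl u) (Inl w) j \<longleftrightarrow> (w \<in> R \<and> cc u (Some w) ! j)"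
proof
  assume "EBIT AA RR bb (Inl u) (Inl w) j"
  then obtain e where e: "(Inl u, e) \<in> RR" "(Inl w, e) \<in> RR" "e \<in> Zs j"
    unfolding EBIT_def using bb8[OF assms(3)] by auto
  from e(1) obtain e' where e': "e = Inr e'" "u \<in> e'" "e' \<in> E" using RR_iff by auto
  have "w \<in> e'" using e(2) e'(1) RR_iff by auto
  from e(3) e'(1) obtain u' w' where uw: "e' = {u',w'}" "u' \<in> B1" "w' \<in> R" "cc u' (Some w') ! j"
    unfolding Zs_def by auto
  have "u = u'" using uw e'(2) B1_R assms(1) by auto
  moreover have "w = w'" using uw \<open>w \<in> e'\<close> B1_V0 assms(2) calculation by auto
  ultimately show "w \<in> R \<and> cc u (Some w) ! j" using uw by simp
next
  assume "w \<in> R \<and> cc u (Some w) ! j"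
  then have w: "w \<in> R" "cc u (Some w) ! j" by auto
  let ?e = "Inr {u,w} :: 'v + 'v set"
  have "{u,w} \<in> E" using edge_B1_R assms(1) w(1) .
  then have "?e \<in> AA" "(Inl u, ?e) \<in> RR" "(Inl w, ?e) \<in> RR"
    using assms(1) w(1) B1_sub B_sub AA_eq RR_iff by (auto simp: R_def)
  moreover have "?e \<in> bb (8+j)" using bb8[OF assms(3)] w assms(1) unfolding Zs_def by blast
  ultimately show "EBIT AA RR bb (Inl u) (Inl w) j" unfolding EBIT_def by blast
qed

definition code :: "'v \<Rightarrow> bool list list" where
  "code u = cc u None # map (\<lambda>m. if xs!m \<in> R then cc u (Some (xs!m)) else replicate s False) [0..<n0]"

lemma cc_len: "u \<in> B1 \<Longrightarrow> o' \<in> POS \<Longrightarrow> length (cc u o') = s"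
  using cc(1) by (auto simp: PiE_def Pi_def)

lemma code_len: "length (code u) = Suc n0" by (simp add: code_def)
lemma code_nth_len: "u \<in> B1 \<Longrightarrow> i < Suc n0 \<Longrightarrow> length (code u ! i) = s"
  using cc_len by (cases i) (auto simp: code_def R_V0)

lemma code0: "code u ! 0 = cc u None" by (simp add: code_def)
lemma codeS: "m < n0 \<Longrightarrow> code u ! Suc m = (if xs!m \<in> R then cc u (Some (xs!m)) else replicate s False)"
  by (simp add: code_def)

lemma selfbit_code: "u \<in> B1 \<Longrightarrow> j < s \<Longrightarrow> Inl u \<in> bb (8+j) \<longleftrightarrow> code u ! 0 ! j"
  using selfbit by (simp add: code0)

lemma ebit_code: "u \<in> B1 \<Longrightarrow> m < n0 \<Longrightarrow> j < s \<Longrightarrow> EBIT AA RR bb (Inl u) (Inl (xs!m)) j \<longleftrightarrow> code u ! Suc m ! j"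
proof -
  assume a: "u \<in> B1" "m < n0" "j < s"
  have "xs!m \<in> V0" using a(2) xs(2) by (auto simp: n0_def)
  then show ?thesis using ebit[OF a(1) _ a(3)] a by (simp add: codeS)
qed

lemma bool_list_less: "length a = s \<Longrightarrow> length (b::bool list) = s \<Longrightarrow>
  a < b \<longleftrightarrow> (\<exists>j<s. (\<forall>j'<j. a!j' = b!j') \<and> \<not> a!j \<and> b!j)"
  using list_less_nth[of a b] by (auto simp: less_bool_def)

lemma bool_list_eq: "length a = s \<Longrightarrow> length (b::bool list) = s \<Longrightarrow>
  a = b \<longleftrightarrow> (\<forall>j<s. a!j = b!j)"
  by (auto simp: list_eq_iff_nth_eq)

lemma CHLE_xs: "m' < n0 \<Longrightarrow> m < n0 \<Longrightarrow> CHLE AA RR bb (Inl (xs!m')) (Inl (xs!m)) \<longleftrightarrow> m' \<le> m"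
  using CHLE_iff xs_inj by auto

lemma lex_cong: "(\<And>j. j < s \<Longrightarrow> (P1 j \<longleftrightarrow> P2 j) \<and> (Q1 j \<longleftrightarrow> Q2 j)) \<Longrightarrow>
  (\<exists>j<s. (\<forall>j'<j. P1 j' \<longleftrightarrow> Q1 j') \<and> \<not> P1 j \<and> Q1 j) \<longleftrightarrow> (\<exists>j<s. (\<forall>j'<j. P2 j' \<longleftrightarrow> Q2 j') \<and> \<not> P2 j \<and> Q2 j)"
proof -
  assume H: "\<And>j. j < s \<Longrightarrow> (P1 j \<longleftrightarrow> P2 j) \<and> (Q1 j \<longleftrightarrow> Q2 j)"
  have "(\<forall>j'<j. P1 j' \<longleftrightarrow> Q1 j') \<longleftrightarrow> (\<forall>j'<j. P2 j' \<longleftrightarrow> Q2 j')" if "j < s" for j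
    using H that by (meson order.strict_trans)
  then show ?thesis using H by (meson)
qed

lemma CODELT_code: assumes u: "u \<in> B1" and v: "v \<in> B1"
  shows "CODELT AA RR bb s (Inl u) (Inl v) \<longleftrightarrow> code u < code v"
proof -
  let ?cu = "code u" and ?cv = "code v"
  have L: "\<And>i. i < Suc n0 \<Longrightarrow> length (?cu!i) = s \<and> length (?cv!i) = s"
    using code_nth_len u v by auto
  have t1: "(\<exists>j<s. (\<forall>j'<j. Inl u\<in>bb(8+j') \<longleftrightarrow> Inl v\<in>bb(8+j')) \<and> Inl u\<notin>bb(8+j) \<and> Inl v\<in>bb(8+j))
     \<longleftrightarrow> ?cu!0 < ?cv!0"
  proof -
    have "(\<exists>j<s. (\<forall>j'<j. Inl u\<in>bb(8+j') \<longleftrightarrow> Inl v\<in>bb(8+j')) \<and> Inl u\<notin>bb(8+j) \<and> Inl v\<in>bb(8+j))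
       \<longleftrightarrow> (\<exists>j<s. (\<forall>j'<j. ?cu!0!j' = ?cv!0!j') \<and> \<not> ?cu!0!j \<and> ?cv!0!j)"
      by (rule lex_cong) (simp add: selfbit_code[OF u] selfbit_code[OF v])
    also have "\<dots> \<longleftrightarrow> ?cu!0 < ?cv!0" using L[of 0] bool_list_less by auto
    finally show ?thesis .
  qed
  have t2: "(\<forall>j<s. Inl u\<in>bb(8+j) \<longleftrightarrow> Inl v\<in>bb(8+j)) \<longleftrightarrow> ?cu!0 = ?cv!0"
    using selfbit_code[OF u] selfbit_code[OF v] L[of 0] bool_list_eq by auto
  have t3: "(\<forall>j<s. EBIT AA RR bb (Inl u) (Inl (xs!m)) j \<longleftrightarrow> EBIT AA RR bb (Inl v) (Inl (xs!m)) j)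
      \<longleftrightarrow> ?cu!Suc m = ?cv!Suc m" if "m < n0" for m
    using ebit_code[OF u that] ebit_code[OF v that] L[of "Suc m"] that bool_list_eq by auto
  have t4: "(\<exists>j<s. (\<forall>j'<j. EBIT AA RR bb (Inl u) (Inl (xs!m)) j' \<longleftrightarrow> EBIT AA RR bb (Inl v) (Inl (xs!m)) j') \<and>
         \<not> EBIT AA RR bb (Inl u) (Inl (xs!m)) j \<and> EBIT AA RR bb (Inl v) (Inl (xs!m)) j)
      \<longleftrightarrow> ?cu!Suc m < ?cv!Suc m" if "m < n0" for m
  proof -
    have "(\<exists>j<s. (\<forall>j'<j. EBIT AA RR bb (Inl u) (Inl (xs!m)) j' \<longleftrightarrow> EBIT AA RR bb (Inl v) (Inl (xs!m)) j') \<and>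
         \<not> EBIT AA RR bb (Inl u) (Inl (xs!m)) j \<and> EBIT AA RR bb (Inl v) (Inl (xs!m)) j)
       \<longleftrightarrow> (\<exists>j<s. (\<forall>j'<j. ?cu!Suc m!j' = ?cv!Suc m!j') \<and> \<not> ?cu!Suc m!j \<and> ?cv!Suc m!j)"
      by (rule lex_cong) (simp add: ebit_code[OF u that] ebit_code[OF v that])
    also have "\<dots> \<longleftrightarrow> ?cu!Suc m < ?cv!Suc m" using L[of "Suc m"] that bool_list_less by auto
    finally show ?thesis .
  qed
  define Q where "Q w' \<longleftrightarrow> (\<forall>j<s. EBIT AA RR bb (Inl u) w' j \<longleftrightarrow> EBIT AA RR bb (Inl v) w' j)" for w'
  define T where "T w \<longleftrightarrow> (\<exists>j<s. (\<forall>j'<j. EBIT AA RR bb (Inl u) w j' \<longleftrightarrow> EBIT AA RR bb (Inl v) w j') \<and>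
         \<not> EBIT AA RR bb (Inl u) w j \<and> EBIT AA RR bb (Inl v) w j)" for w
  have t5: "(\<forall>w'\<in>AA. w'\<in>bb 6 \<and> CHLE AA RR bb w' (Inl (xs!m)) \<and> w' \<noteq> Inl (xs!m) \<longrightarrow> Q w')
      \<longleftrightarrow> (\<forall>m'<m. ?cu!Suc m' = ?cv!Suc m')" if "m < n0" for m
  proof
    assume H: "\<forall>w'\<in>AA. w'\<in>bb 6 \<and> CHLE AA RR bb w' (Inl (xs!m)) \<and> w' \<noteq> Inl (xs!m) \<longrightarrow> Q w'"
    show "\<forall>m'<m. ?cu!Suc m' = ?cv!Suc m'"
    proof (intro allI impI)
      fix m' assume "m' < m"
      then have m': "m' < n0" using that by simp
      have "Inl (xs!m') \<in> AA" "Inl (xs!m') \<in> bb 6" using xs_V m' xs(2) AA_eq bb6 by (auto simp: n0_def)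
      moreover have "CHLE AA RR bb (Inl (xs!m')) (Inl (xs!m))" using CHLE_xs m' that \<open>m' < m\<close> by simp
      moreover have "Inl (xs!m') \<noteq> (Inl (xs!m) :: 'v + 'v set)" using xs_inj m' that \<open>m' < m\<close> by auto
      ultimately have "Q (Inl (xs!m'))" using H by blast
      then show "?cu!Suc m' = ?cv!Suc m'" using t3[OF m'] by (simp add: Q_def)
    qed
  next
    assume H: "\<forall>m'<m. ?cu!Suc m' = ?cv!Suc m'"
    show "\<forall>w'\<in>AA. w'\<in>bb 6 \<and> CHLE AA RR bb w' (Inl (xs!m)) \<and> w' \<noteq> Inl (xs!m) \<longrightarrow> Q w'"
    proof (intro ballI impI)
      fix w' assume w': "w' \<in> AA" "w'\<in>bb 6 \<and> CHLE AA RR bb w' (Inl (xs!m)) \<and> w' \<noteq> Inl (xs!m)"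
      then obtain m' where m': "m' < n0" "w' = Inl (xs!m')" using V0_xs bb6 by auto
      then have "m' \<le> m" "m' \<noteq> m" using w' CHLE_xs that by auto
      then show "Q w'" using H t3[OF m'(1)] m'(2) by (simp add: Q_def)
    qed
  qed
  have "CODELT AA RR bb s (Inl u) (Inl v) \<longleftrightarrow>
     ?cu!0 < ?cv!0 \<or> (?cu!0 = ?cv!0 \<and> (\<exists>w\<in>AA. w \<in> bb 6 \<and>
        (\<forall>w'\<in>AA. w'\<in>bb 6 \<and> CHLE AA RR bb w' w \<and> w' \<noteq> w \<longrightarrow> Q w') \<and> T w))"
    by (simp only: CODELT_def t1 t2 Q_def T_def)
  also have "\<dots> \<longleftrightarrow> ?cu!0 < ?cv!0 \<or> (?cu!0 = ?cv!0 \<and> (\<exists>m<n0. (\<forall>m'<m. ?cu!Suc m' = ?cv!Suc m') \<and> ?cu!Suc m < ?cv!Suc m))"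
  proof -
    have "(\<exists>w\<in>AA. w \<in> bb 6 \<and> (\<forall>w'\<in>AA. w'\<in>bb 6 \<and> CHLE AA RR bb w' w \<and> w' \<noteq> w \<longrightarrow> Q w') \<and> T w)
       \<longleftrightarrow> (\<exists>m<n0. (\<forall>m'<m. ?cu!Suc m' = ?cv!Suc m') \<and> ?cu!Suc m < ?cv!Suc m)"
    proof
      assume "\<exists>w\<in>AA. w \<in> bb 6 \<and> (\<forall>w'\<in>AA. w'\<in>bb 6 \<and> CHLE AA RR bb w' w \<and> w' \<noteq> w \<longrightarrow> Q w') \<and> T w"
      then obtain w where w: "w \<in> bb 6" "\<forall>w'\<in>AA. w'\<in>bb 6 \<and> CHLE AA RR bb w' w \<and> w' \<noteq> w \<longrightarrow> Q w'" "T w"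
        by blast
      then obtain m where m: "m < n0" "w = Inl (xs!m)" using V0_xs bb6 by auto
      show "\<exists>m<n0. (\<forall>m'<m. ?cu!Suc m' = ?cv!Suc m') \<and> ?cu!Suc m < ?cv!Suc m"
        using t5[OF m(1)] t4[OF m(1)] w m by (auto simp: T_def)
    next
      assume "\<exists>m<n0. (\<forall>m'<m. ?cu!Suc m' = ?cv!Suc m') \<and> ?cu!Suc m < ?cv!Suc m"
      then obtain m where m: "m < n0" "\<forall>m'<m. ?cu!Suc m' = ?cv!Suc m'" "?cu!Suc m < ?cv!Suc m" by blast
      have "Inl (xs!m) \<in> AA" "Inl (xs!m) \<in> bb 6" using xs_V m xs(2) AA_eq bb6 by (auto simp: n0_def)
      then show "\<exists>w\<in>AA. w \<in> bb 6 \<and> (\<forall>w'\<in>AA. w'\<in>bb 6 \<and> CHLE AA RR bb w' w \<and> w' \<noteq> w \<longrightarrow> Q w') \<and> T w"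
        using t5[OF m(1)] t4[OF m(1)] m by (auto simp: T_def)
    qed
    then show ?thesis by simp
  qed
  also have "\<dots> \<longleftrightarrow> ?cu < ?cv"
  proof -
    have "?cu < ?cv \<longleftrightarrow> (\<exists>i<Suc n0. (\<forall>i'<i. ?cu!i' = ?cv!i') \<and> ?cu!i < ?cv!i)"
      using list_less_nth[of ?cu ?cv] code_len by simp
    also have "\<dots> \<longleftrightarrow> ?cu!0 < ?cv!0 \<or> (?cu!0 = ?cv!0 \<and> (\<exists>m<n0. (\<forall>m'<m. ?cu!Suc m' = ?cv!Suc m') \<and> ?cu!Suc m < ?cv!Suc m))"
    proof
      assume "\<exists>i<Suc n0. (\<forall>i'<i. ?cu!i' = ?cv!i') \<and> ?cu!i < ?cv!i"
      then obtain i where i: "i < Suc n0" "\<forall>i'<i. ?cu!i' = ?cv!i'" "?cu!i < ?cv!i" by blast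
      show "?cu!0 < ?cv!0 \<or> (?cu!0 = ?cv!0 \<and> (\<exists>m<n0. (\<forall>m'<m. ?cu!Suc m' = ?cv!Suc m') \<and> ?cu!Suc m < ?cv!Suc m))"
      proof (cases i)
        case 0 then show ?thesis using i by simp
      next
        case (Suc m)
        then show ?thesis using i by (intro disjI2 conjI exI[of _ m]) auto
      qed
    next
      assume "?cu!0 < ?cv!0 \<or> (?cu!0 = ?cv!0 \<and> (\<exists>m<n0. (\<forall>m'<m. ?cu!Suc m' = ?cv!Suc m') \<and> ?cu!Suc m < ?cv!Suc m))"
      then show "\<exists>i<Suc n0. (\<forall>i'<i. ?cu!i' = ?cv!i') \<and> ?cu!i < ?cv!i"
      proof
        assume "?cu!0 < ?cv!0" then show ?thesis by (intro exI[of _ 0]) auto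
      next
        assume "?cu!0 = ?cv!0 \<and> (\<exists>m<n0. (\<forall>m'<m. ?cu!Suc m' = ?cv!Suc m') \<and> ?cu!Suc m < ?cv!Suc m)"
        then obtain m where m: "?cu!0 = ?cv!0" "m < n0" "\<forall>m'<m. ?cu!Suc m' = ?cv!Suc m'" "?cu!Suc m < ?cv!Suc m"
          by blast
        have "\<forall>i'<Suc m. ?cu!i' = ?cv!i'"
        proof (intro allI impI)
          fix i' assume "i' < Suc m"
          then show "?cu!i' = ?cv!i'" using m by (cases i') auto
        qed
        then show ?thesis using m by (intro exI[of _ "Suc m"]) auto
      qed
    qed
    finally show ?thesis by simp
  qed
  finally show ?thesis .
qed

end

context constr begin

definition posn :: "'v \<Rightarrow> nat" where "posn v = (THE m. m < n0 \<and> xs!m = v)"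
lemma posn: "m < n0 \<Longrightarrow> posn (xs!m) = m"
  unfolding posn_def using xs_inj by (intro the_equality) auto

definition vk :: "'v \<Rightarrow> nat \<times> nat \<times> bool list list" where
  "vk v = (if v \<in> V0 then (0, posn v, []) else (1, 0, code v))"

lemma code_inj: assumes "u \<in> B1" "v \<in> B1" "code u = code v" shows "u = v"
proof -
  have "cc u = cc v"
  proof (rule PiE_ext)
    show "cc u \<in> PiE POS (\<lambda>_. BL)" "cc v \<in> PiE POS (\<lambda>_. BL)" using cc(1) assms by auto
    fix o' assume o': "o' \<in> POS"
    show "cc u o' = cc v o'"
    proof (cases o')
      case None then show ?thesis using assms(3) code0 by metis
    next
      case (Some w)
      then have "w \<in> R" using o' by auto
      then obtain m where m: "m < n0" "w = xs!m" using V0_xs R_V0 by blast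
      then show ?thesis using codeS[OF m(1), of u] codeS[OF m(1), of v] assms(3) Some \<open>w \<in> R\<close> by metis
    qed
  qed
  then show ?thesis using cc(2) assms inj_onD by metis
qed

lemma bb5_iff: "Inl a \<in> bb 5 \<longleftrightarrow> a \<in> B1" by (auto simp: bb5)

lemma VLE_vk: assumes a: "a \<in> V" and b: "b \<in> V"
  shows "VLE AA RR bb s (Inl a) (Inl b) \<longleftrightarrow> vk a \<le> vk b"
proof -
  consider "a \<in> V0" "b \<in> V0" | "a \<in> V0" "b \<in> B1" | "a \<in> B1" "b \<in> V0" | "a \<in> B1" "b \<in> B1"
    using a b V_split by blast
  then show ?thesis
  proof cases
    case 1
    then obtain ma mb where m: "ma < n0" "a = xs!ma" "mb < n0" "b = xs!mb" using V0_xs by blast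
    have "a \<notin> B1" "b \<notin> B1" using 1 V_split by auto
    then have "VLE AA RR bb s (Inl a) (Inl b) \<longleftrightarrow> CHLE AA RR bb (Inl a) (Inl b)"
      by (simp add: VLE_def bb5_iff)
    also have "\<dots> \<longleftrightarrow> ma \<le> mb" using CHLE_xs m by simp
    also have "\<dots> \<longleftrightarrow> vk a \<le> vk b" using 1 m posn by (auto simp: vk_def)
    finally show ?thesis .
  next
    case 2
    have "a \<notin> B1" using 2 V_split by auto
    then show ?thesis using 2 B1_V0 by (simp add: VLE_def bb5_iff vk_def)
  next
    case 3
    have "b \<notin> B1" using 3 V_split by auto
    then show ?thesis using 3 B1_V0 by (simp add: VLE_def bb5_iff vk_def)
  next
    case 4
    have "VLE AA RR bb s (Inl a) (Inl b) \<longleftrightarrow> a = b \<or> code a < code b"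
      using 4 CODELT_code by (simp add: VLE_def bb5_iff)
    also have "\<dots> \<longleftrightarrow> code a \<le> code b" using code_inj 4 by (auto simp: le_less)
    also have "\<dots> \<longleftrightarrow> vk a \<le> vk b" using 4 B1_V0 by (simp add: vk_def)
    finally show ?thesis .
  qed
qed

lemma vk_inj: "inj_on vk V"
proof (rule inj_onI)
  fix a b assume ab: "a \<in> V" "b \<in> V" "vk a = vk b"
  consider "a \<in> V0" "b \<in> V0" | "a \<in> V0" "b \<in> B1" | "a \<in> B1" "b \<in> V0" | "a \<in> B1" "b \<in> B1"
    using ab V_split by blast
  then show "a = b"
  proof cases
    case 1
    then obtain ma mb where m: "ma < n0" "a = xs!ma" "mb < n0" "b = xs!mb" using V0_xs by blast
    then show ?thesis using ab 1 posn by (simp add: vk_def)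
  next
    case 2 then show ?thesis using ab B1_V0 by (simp add: vk_def)
  next
    case 3 then show ?thesis using ab B1_V0 by (simp add: vk_def)
  next
    case 4 then show ?thesis using ab B1_V0 code_inj by (simp add: vk_def)
  qed
qed

lemma edge_lohi: "e \<in> E \<Longrightarrow> \<exists>lo hi. e = {lo,hi} \<and> lo \<in> V \<and> hi \<in> V \<and> vk lo < vk hi"
proof -
  assume "e \<in> E"
  then obtain a b where ab: "e = {a,b}" "a \<in> V" "b \<in> V" "pf a \<noteq> pf b" using edge_form by blast
  then have "vk a \<noteq> vk b" using vk_inj inj_onD by metis
  then show ?thesis
  proof (cases "vk a < vk b")
    case True then show ?thesis using ab by blast
  next
    case False
    then have "vk b < vk a" using \<open>vk a \<noteq> vk b\<close> by auto
    then show ?thesis using ab by (intro exI[of _ b] exI[of _ a]) auto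
  qed
qed

lemma pair_iff:
  assumes e: "e \<in> E" "e = {lo,hi}" "lo \<in> V" "hi \<in> V" "vk lo < vk hi" and pq: "p \<in> AA" "q \<in> AA"
  shows "((p, Inr e) \<in> RR \<and> (q, Inr e) \<in> RR \<and> VLE AA RR bb s p q \<and> p \<noteq> q) \<longleftrightarrow> (p = Inl lo \<and> q = Inl hi)"
proof
  assume H: "(p, Inr e) \<in> RR \<and> (q, Inr e) \<in> RR \<and> VLE AA RR bb s p q \<and> p \<noteq> q"
  then obtain a b where ab: "p = Inl a" "q = Inl b" "a \<in> e" "b \<in> e" "a \<in> V" "b \<in> V" using RR_iff by auto
  then have "vk a \<le> vk b" "a \<noteq> b" using H VLE_vk by auto
  then show "p = Inl lo \<and> q = Inl hi" using ab e by auto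
next
  assume "p = Inl lo \<and> q = Inl hi"
  moreover have "lo \<noteq> hi" using e(5) by auto
  ultimately show "(p, Inr e) \<in> RR \<and> (q, Inr e) \<in> RR \<and> VLE AA RR bb s p q \<and> p \<noteq> q"
    using e VLE_vk RR_iff by auto
qed

lemma ELE_iff:
  assumes e1: "e1 \<in> E" "e1 = {lo1,hi1}" "lo1 \<in> V" "hi1 \<in> V" "vk lo1 < vk hi1"
    and e2: "e2 \<in> E" "e2 = {lo2,hi2}" "lo2 \<in> V" "hi2 \<in> V" "vk lo2 < vk hi2"
  shows "ELE AA RR bb s (Inr e1) (Inr e2) \<longleftrightarrow> (vk lo1, vk hi1) \<le> (vk lo2, vk hi2)"
proof -
  have inA: "Inl lo1 \<in> AA" "Inl hi1 \<in> AA" "Inl lo2 \<in> AA" "Inl hi2 \<in> AA" using e1 e2 AA_eq by auto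
  have "ELE AA RR bb s (Inr e1) (Inr e2) \<longleftrightarrow>
     (\<exists>a\<in>AA. \<exists>b\<in>AA. \<exists>c\<in>AA. \<exists>d\<in>AA. (a = Inl lo1 \<and> b = Inl hi1) \<and> (c = Inl lo2 \<and> d = Inl hi2) \<and>
        ((VLE AA RR bb s a c \<and> a \<noteq> c) \<or> (a = c \<and> VLE AA RR bb s b d)))"
    unfolding ELE_def using pair_iff[OF e1] pair_iff[OF e2] by (smt (verit, best))
  also have "\<dots> \<longleftrightarrow> (VLE AA RR bb s (Inl lo1) (Inl lo2) \<and> lo1 \<noteq> lo2) \<or> (lo1 = lo2 \<and> VLE AA RR bb s (Inl hi1) (Inl hi2))"
    using inA by auto
  also have "\<dots> \<longleftrightarrow> (vk lo1 \<le> vk lo2 \<and> lo1 \<noteq> lo2) \<or> (lo1 = lo2 \<and> vk hi1 \<le> vk hi2)"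
    using VLE_vk e1 e2 by auto
  also have "\<dots> \<longleftrightarrow> (vk lo1, vk hi1) \<le> (vk lo2, vk hi2)"
    using vk_inj e1 e2 inj_onD[OF vk_inj, of lo1 lo2] by (auto simp: less_le)
  finally show ?thesis .
qed

definition key :: "'v + 'v set \<Rightarrow> nat \<times> (nat \<times> nat \<times> bool list list) \<times> (nat \<times> nat \<times> bool list list)" where
  "key x = (case x of Inl v \<Rightarrow> (0, vk v, vk v) | Inr e \<Rightarrow> (1, Min (vk ` e), Max (vk ` e)))"

lemma key_edge: "e = {lo,hi} \<Longrightarrow> vk lo < vk hi \<Longrightarrow> key (Inr e) = (1, vk lo, vk hi)"
  by (auto simp: key_def min_def max_def)

lemma bb0_iff: "x \<in> AA \<Longrightarrow> x \<in> bb 0 \<longleftrightarrow> (\<exists>v. x = Inl v)"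
  by (auto simp: bb0 AA_eq)

lemma TOP_key: assumes "x \<in> AA" "y \<in> AA"
  shows "TOP AA RR bb s x y \<longleftrightarrow> key x \<le> key y"
proof (cases x)
  case (Inl a)
  then have a: "a \<in> V" using assms AA_eq by auto
  show ?thesis
  proof (cases y)
    case (Inl b)
    then have b: "b \<in> V" using assms AA_eq by auto
    show ?thesis using VLE_vk[OF a b] \<open>x = Inl a\<close> Inl a b
      by (auto simp: TOP_def bb0 key_def)
  next
    case (Inr e)
    then show ?thesis using \<open>x = Inl a\<close> a by (auto simp: TOP_def bb0 key_def)
  qed
next
  case (Inr e1)
  then have e1: "e1 \<in> E" using assms AA_eq by auto
  show ?thesis
  proof (cases y)
    case (Inl b)
    then have "b \<in> V" using assms AA_eq by auto
    then show ?thesis using \<open>x = Inr e1\<close> Inl by (auto simp: TOP_def bb0 key_def)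
  next
    case (Inr e2)
    then have e2: "e2 \<in> E" using assms AA_eq by auto
    obtain lo1 hi1 where l1: "e1 = {lo1,hi1}" "lo1 \<in> V" "hi1 \<in> V" "vk lo1 < vk hi1" using edge_lohi[OF e1] by blast
    obtain lo2 hi2 where l2: "e2 = {lo2,hi2}" "lo2 \<in> V" "hi2 \<in> V" "vk lo2 < vk hi2" using edge_lohi[OF e2] by blast
    have "TOP AA RR bb s x y \<longleftrightarrow> ELE AA RR bb s (Inr e1) (Inr e2)"
      using \<open>x = Inr e1\<close> Inr by (auto simp: TOP_def bb0)
    also have "\<dots> \<longleftrightarrow> (vk lo1, vk hi1) \<le> (vk lo2, vk hi2)" using ELE_iff[OF e1 l1 e2 l2] .
    also have "\<dots> \<longleftrightarrow> key x \<le> key y" using key_edge[OF l1(1,4)] key_edge[OF l2(1,4)] \<open>x = Inr e1\<close> Inr by simp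
    finally show ?thesis .
  qed
qed

lemma key_inj: "inj_on key AA"
proof (rule inj_onI)
  fix x y assume xy: "x \<in> AA" "y \<in> AA" "key x = key y"
  show "x = y"
  proof (cases x)
    case (Inl a)
    then have a: "a \<in> V" using xy AA_eq by auto
    show ?thesis
    proof (cases y)
      case (Inl b)
      then show ?thesis using xy \<open>x = Inl a\<close> a inj_onD[OF vk_inj] AA_eq by (auto simp: key_def)
    next
      case (Inr e) then show ?thesis using xy \<open>x = Inl a\<close> by (simp add: key_def)
    qed
  next
    case (Inr e1)
    then have e1: "e1 \<in> E" using xy AA_eq by auto
    show ?thesis
    proof (cases y)
      case (Inl b) then show ?thesis using xy \<open>x = Inr e1\<close> by (simp add: key_def)
    next
      case (Inr e2)
      then have e2: "e2 \<in> E" using xy AA_eq by auto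
      obtain lo1 hi1 where l1: "e1 = {lo1,hi1}" "lo1 \<in> V" "hi1 \<in> V" "vk lo1 < vk hi1" using edge_lohi[OF e1] by blast
      obtain lo2 hi2 where l2: "e2 = {lo2,hi2}" "lo2 \<in> V" "hi2 \<in> V" "vk lo2 < vk hi2" using edge_lohi[OF e2] by blast
      have "vk lo1 = vk lo2" "vk hi1 = vk hi2"
        using xy(3) key_edge[OF l1(1,4)] key_edge[OF l2(1,4)] \<open>x = Inr e1\<close> Inr by auto
      then have "lo1 = lo2" "hi1 = hi2" using inj_onD[OF vk_inj] l1 l2 by auto
      then show ?thesis using l1 l2 \<open>x = Inr e1\<close> Inr by simp
    qed
  qed
qed

theorem orders:
  "linear_order_on AA {(a, b). a \<in> AA \<and> b \<in> AA \<and>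
      sat AA RR (\<lambda>i. if i = 0 then a else b) (\<lambda>i. if i < 8 + s then bb i else {}) (gtop s)}"
proof -
  have "{(a, b). a \<in> AA \<and> b \<in> AA \<and>
      sat AA RR (\<lambda>i. if i = 0 then a else b) (\<lambda>i. if i < 8 + s then bb i else {}) (gtop s)}
      = {(a, b). a \<in> AA \<and> b \<in> AA \<and> key a \<le> key b}"
    using TOP_key by (auto simp: sat_gtop bb_trunc)
  then show ?thesis using linear_order_key[OF key_inj] by simp
qed

end

lemma sat_inv:
  assumes inv: "\<And>z. \<sigma> (\<sigma> z) = z" and sA: "\<And>z. z \<in> A \<Longrightarrow> \<sigma> z \<in> A"
    and sR: "\<And>x y. (x, y) \<in> R \<Longrightarrow> (\<sigma> x, \<sigma> y) \<in> R"
  shows "sat A R \<alpha> \<beta> \<phi> \<longleftrightarrow> sat A R (\<sigma> \<circ> \<alpha>) (\<lambda>i. \<sigma> ` \<beta> i) \<phi>"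
proof (induction \<phi> arbitrary: \<alpha> \<beta>)
  case (Rel i j)
  have "(x, y) \<in> R \<longleftrightarrow> (\<sigma> x, \<sigma> y) \<in> R" for x y using sR[of x y] sR[of "\<sigma> x" "\<sigma> y"] inv by auto
  then show ?case by simp
next
  case (Eq i j)
  then show ?case using inv by (metis comp_apply sat.simps(2))
next
  case (Mem i j)
  have "x \<in> S \<longleftrightarrow> \<sigma> x \<in> \<sigma> ` S" for x S using inv by (metis image_iff)
  then show ?case by simp
next
  case (Neg \<phi>) then show ?case by simp
next
  case (Conj \<phi>1 \<phi>2) then show ?case by simp
next
  case (Ex1 i \<phi>)
  have eq: "\<sigma> \<circ> \<alpha>(i := a) = (\<sigma> \<circ> \<alpha>)(i := \<sigma> a)" for a by (auto simp: fun_eq_iff)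
  show ?case
  proof
    assume "sat A R \<alpha> \<beta> (Ex1 i \<phi>)"
    then obtain a where a: "a \<in> A" "sat A R (\<alpha>(i:=a)) \<beta> \<phi>" by auto
    have "sat A R (\<sigma> \<circ> \<alpha>(i:=a)) (\<lambda>i. \<sigma> ` \<beta> i) \<phi>" using Ex1.IH a(2) by blast
    then have "sat A R ((\<sigma> \<circ> \<alpha>)(i := \<sigma> a)) (\<lambda>i. \<sigma> ` \<beta> i) \<phi>"
      by (simp only: eq)
    then show "sat A R (\<sigma> \<circ> \<alpha>) (\<lambda>i. \<sigma> ` \<beta> i) (Ex1 i \<phi>)"
      using sA[OF a(1)] by (simp only: sat.simps) blast
  next
    assume "sat A R (\<sigma> \<circ> \<alpha>) (\<lambda>i. \<sigma> ` \<beta> i) (Ex1 i \<phi>)"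
    then obtain b where b: "b \<in> A" "sat A R ((\<sigma> \<circ> \<alpha>)(i:=b)) (\<lambda>i. \<sigma> ` \<beta> i) \<phi>" by auto
    have "(\<sigma> \<circ> \<alpha>)(i:=b) = \<sigma> \<circ> \<alpha>(i := \<sigma> b)" using eq[of "\<sigma> b"] inv by simp
    then have "sat A R (\<sigma> \<circ> \<alpha>(i:=\<sigma> b)) (\<lambda>i. \<sigma> ` \<beta> i) \<phi>" using b(2) by simp
    then have "sat A R (\<alpha>(i:=\<sigma> b)) \<beta> \<phi>" using Ex1.IH by blast
    then show "sat A R \<alpha> \<beta> (Ex1 i \<phi>)" using sA[OF b(1)] by auto
  qed
next
  case (ExS j \<phi>)
  have eq: "(\<lambda>i. \<sigma> ` (\<beta>(j := X)) i) = (\<lambda>i. \<sigma> ` \<beta> i)(j := \<sigma> ` X)" for X by (auto simp: fun_eq_iff)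
  have sub: "X \<subseteq> A \<Longrightarrow> \<sigma> ` X \<subseteq> A" for X using sA by auto
  have ii: "\<sigma> ` \<sigma> ` X = X" for X using inv by (auto simp: image_iff)
  show ?case
  proof
    assume "sat A R \<alpha> \<beta> (ExS j \<phi>)"
    then obtain X where X: "X \<subseteq> A" "sat A R \<alpha> (\<beta>(j:=X)) \<phi>" by auto
    have "sat A R (\<sigma> \<circ> \<alpha>) (\<lambda>i. \<sigma> ` (\<beta>(j := X)) i) \<phi>" using ExS.IH X(2) by blast
    then have "sat A R (\<sigma> \<circ> \<alpha>) ((\<lambda>i. \<sigma> ` \<beta> i)(j := \<sigma> ` X)) \<phi>" by (simp only: eq)
    then show "sat A R (\<sigma> \<circ> \<alpha>) (\<lambda>i. \<sigma> ` \<beta> i) (ExS j \<phi>)"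
      using sub[OF X(1)] by (simp only: sat.simps) blast
  next
    assume "sat A R (\<sigma> \<circ> \<alpha>) (\<lambda>i. \<sigma> ` \<beta> i) (ExS j \<phi>)"
    then obtain Y where Y: "Y \<subseteq> A" "sat A R (\<sigma> \<circ> \<alpha>) ((\<lambda>i. \<sigma> ` \<beta> i)(j:=Y)) \<phi>" by auto
    have "(\<lambda>i. \<sigma> ` \<beta> i)(j:=Y) = (\<lambda>i. \<sigma> ` (\<beta>(j := \<sigma> ` Y)) i)" using eq[of "\<sigma> ` Y"] ii by simp
    then have "sat A R (\<sigma> \<circ> \<alpha>) (\<lambda>i. \<sigma> ` (\<beta>(j := \<sigma> ` Y)) i) \<phi>" using Y(2) by simp
    then have "sat A R \<alpha> (\<beta>(j:=\<sigma> ` Y)) \<phi>" using ExS.IH by blast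
    then show "sat A R \<alpha> \<beta> (ExS j \<phi>)" using sub[OF Y(1)] by auto
  qed
qed


context cmg begin

abbreviation "AI \<equiv> fst (inc_structure G)"
abbreviation "RI \<equiv> snd (inc_structure G)"

lemma AI_eq: "AI = Inl ` V \<union> Inr ` E" by (simp add: inc_structure_def)
lemma RI_iff: "(x, y) \<in> RI \<longleftrightarrow> (\<exists>v e. x = Inl v \<and> y = Inr e \<and> v \<in> V \<and> e \<in> E \<and> v \<in> e)"
  by (auto simp: inc_structure_def)

lemma swap_lemma:
  fixes \<phi> :: mso and k :: nat and Pp :: "nat \<Rightarrow> ('v + 'v set) set"
  assumes lin: "linear_order_on AI {(a,b). a\<in>AI \<and> b\<in>AI \<and> sat AI RI (\<lambda>i. if i=0 then a else b) (\<lambda>i. if i<k then Pp i else {}) \<phi>}"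
    and Pp: "\<forall>i<k. Pp i \<subseteq> AI"
    and uv: "u \<in> V" "v \<in> V" "u \<noteq> v" "pf u = pf v"
    and selfeq: "\<And>j. j < k \<Longrightarrow> Inl u \<in> Pp j \<longleftrightarrow> Inl v \<in> Pp j"
    and edgeeq: "\<And>j w. j < k \<Longrightarrow> w \<in> V \<Longrightarrow> pf w \<noteq> pf u \<Longrightarrow> Inr {u,w} \<in> Pp j \<longleftrightarrow> Inr {v,w} \<in> Pp j"
  shows False
proof -
  define sw where "sw x = (if x = u then v else if x = v then u else x)" for x
  define \<sigma> where "\<sigma> z = (case z of Inl x \<Rightarrow> Inl (sw x) | Inr e \<Rightarrow> Inr (sw ` e))" for z :: "'v + 'v set"
  have swsw: "sw (sw x) = x" for x by (auto simp: sw_def)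
  have swV: "x \<in> V \<Longrightarrow> sw x \<in> V" for x using uv by (auto simp: sw_def)
  have pfsw: "pf (sw x) = pf x" for x using uv by (auto simp: sw_def)
  have inv: "\<sigma> (\<sigma> z) = z" for z
    by (cases z) (auto simp: \<sigma>_def swsw image_image)
  have swE: "e \<in> E \<Longrightarrow> sw ` e \<in> E" for e
  proof -
    assume "e \<in> E"
    then obtain a b where ab: "e = {a,b}" "a \<in> V" "b \<in> V" "pf a \<noteq> pf b" using edge_form by blast
    then have "{sw a, sw b} \<in> E" using edge_iff swV pfsw by simp
    then show ?thesis using ab by simp
  qed
  have sA: "z \<in> AI \<Longrightarrow> \<sigma> z \<in> AI" for z
  proof (cases z)
    case (Inl x)
    assume "z \<in> AI" then have "x \<in> V" using Inl AI_eq by auto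
    then show ?thesis using Inl swV AI_eq by (simp add: \<sigma>_def)
  next
    case (Inr e)
    assume "z \<in> AI" then have "e \<in> E" using Inr AI_eq by auto
    then show ?thesis using Inr swE AI_eq by (simp add: \<sigma>_def)
  qed
  have sR: "(x, y) \<in> RI \<Longrightarrow> (\<sigma> x, \<sigma> y) \<in> RI" for x y
  proof -
    assume "(x, y) \<in> RI"
    then obtain a e where ae: "x = Inl a" "y = Inr e" "a \<in> V" "e \<in> E" "a \<in> e" using RI_iff by blast
    have "\<sigma> x = Inl (sw a)" "\<sigma> y = Inr (sw ` e)" using ae by (simp_all add: \<sigma>_def)
    moreover have "sw a \<in> V" "sw ` e \<in> E" "sw a \<in> sw ` e" using ae swV swE by auto
    ultimately show ?thesis using RI_iff by blast
  qed
  have Ppinv1: "z \<in> Pp j \<Longrightarrow> \<sigma> z \<in> Pp j" if j: "j < k" for z j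
  proof -
    assume z: "z \<in> Pp j"
    then have zA: "z \<in> AI" using Pp j by auto
    show ?thesis
    proof (cases z)
      case (Inl x)
      consider "x = u" | "x = v" | "x \<noteq> u" "x \<noteq> v" by blast
      then show ?thesis
      proof cases
        case 1 then show ?thesis using z Inl selfeq[OF j] uv(3) by (simp add: \<sigma>_def sw_def)
      next
        case 2 then show ?thesis using z Inl selfeq[OF j] uv(3) by (simp add: \<sigma>_def sw_def)
      next
        case 3 then show ?thesis using z Inl by (simp add: \<sigma>_def sw_def)
      qed
    next
      case (Inr e)
      then have e: "e \<in> E" using zA AI_eq by auto
      then obtain a b where ab: "e = {a,b}" "a \<in> V" "b \<in> V" "pf a \<noteq> pf b" using edge_form by blast
      have se: "\<sigma> z = Inr (sw ` e)" using Inr by (simp add: \<sigma>_def)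
      show ?thesis
      proof (cases "u \<in> e")
        case True
        define w where "w = (if a = u then b else a)"
        have w: "e = {u,w}" "w \<in> V" "pf w \<noteq> pf u" using True ab by (auto simp: w_def)
        then have "w \<noteq> v" "w \<noteq> u" using uv by auto
        then have "sw ` e = {v,w}" using w(1) by (auto simp: sw_def)
        then show ?thesis using z Inr edgeeq[OF j w(2,3)] w(1) se by simp
      next
        case False
        show ?thesis
        proof (cases "v \<in> e")
          case True
          define w where "w = (if a = v then b else a)"
          have w: "e = {v,w}" "w \<in> V" "pf w \<noteq> pf u" using True ab uv(4) by (auto simp: w_def)
          then have "w \<noteq> v" "w \<noteq> u" using uv by auto
          then have "sw ` e = {u,w}" using w(1) by (auto simp: sw_def)
          then show ?thesis using z Inr edgeeq[OF j w(2,3)] w(1) se by simp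
        next
          case False2: False
          have "sw ` e = id ` e"
            by (rule image_cong) (use False False2 in \<open>auto simp: sw_def\<close>)
          then show ?thesis using z Inr se by simp
        qed
      qed
    qed
  qed
  have Ppinv: "\<sigma> ` Pp j = Pp j" if "j < k" for j
  proof
    show "\<sigma> ` Pp j \<subseteq> Pp j" using Ppinv1[OF that] by auto
    show "Pp j \<subseteq> \<sigma> ` Pp j"
    proof
      fix z assume "z \<in> Pp j"
      then have "\<sigma> z \<in> Pp j" using Ppinv1[OF that] by auto
      then show "z \<in> \<sigma> ` Pp j" using inv by (metis image_eqI)
    qed
  qed
  define \<beta>0 where "\<beta>0 = (\<lambda>i. if i<k then Pp i else {})"
  have b0: "(\<lambda>i. \<sigma> ` \<beta>0 i) = \<beta>0" using Ppinv by (auto simp: \<beta>0_def fun_eq_iff)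
  define rel where "rel = {(a,b). a\<in>AI \<and> b\<in>AI \<and> sat AI RI (\<lambda>i. if i=0 then a else b) \<beta>0 \<phi>}"
  have uA: "Inl u \<in> AI" "Inl v \<in> AI" using uv AI_eq by auto
  have comp: "\<sigma> \<circ> (\<lambda>i. if i=0 then Inl u else Inl v) = (\<lambda>i. if i=0 then Inl v else Inl u)"
    by (auto simp: fun_eq_iff \<sigma>_def sw_def)
  have "sat AI RI (\<lambda>i. if i=0 then Inl u else Inl v) \<beta>0 \<phi> \<longleftrightarrow> sat AI RI (\<lambda>i. if i=0 then Inl v else Inl u) \<beta>0 \<phi>"
    using sat_inv[where \<sigma>=\<sigma> and A=AI and R=RI and \<alpha>="(\<lambda>i. if i=0 then Inl u else Inl v)" and \<beta>=\<beta>0 and \<phi>=\<phi>,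
        OF inv sA sR] unfolding comp b0 .
  then have "(Inl u, Inl v) \<in> rel \<longleftrightarrow> (Inl v, Inl u) \<in> rel"
    using uA by (simp add: rel_def)
  moreover have tot: "total_on AI rel" using lin by (simp add: linear_order_on_def rel_def \<beta>0_def)
  have "(Inl u, Inl v) \<in> rel \<or> (Inl v, Inl u) \<in> rel"
    using tot uA uv(3) unfolding total_on_def by auto
  ultimately have "(Inl u, Inl v) \<in> rel" "(Inl v, Inl u) \<in> rel" by auto
  moreover have "antisym rel" using lin by (simp add: linear_order_on_def partial_order_on_def rel_def \<beta>0_def)
  ultimately have "(Inl u :: 'v + 'v set) = Inl v" by (meson antisymD)
  then show False using uv by simp
qed

lemma bound_from_order:
  fixes \<phi> :: mso and k :: nat and Pp :: "nat \<Rightarrow> ('v + 'v set) set"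
  assumes lin: "linear_order_on AI {(a,b). a\<in>AI \<and> b\<in>AI \<and> sat AI RI (\<lambda>i. if i=0 then a else b) (\<lambda>i. if i<k then Pp i else {}) \<phi>}"
    and Pp: "\<forall>i<k. Pp i \<subseteq> AI"
  shows "part_max d P \<le> 2 ^ (k * (part_sum d P - part_max d P + 1))"
proof (rule ccontr)
  assume big: "\<not> ?thesis"
  then have "part_max d P > 0" by (metis gr0I le0)
  then obtain i0 where i0: "i0 < d" "card (P i0) = part_max d P" using part_max_attained by blast
  define B where "B = P i0"
  define Rst where "Rst = V - B"
  have BV: "B \<subseteq> V" using P_sub i0 by (simp add: B_def)
  have finB: "finite B" using finP i0 by (simp add: B_def)
  have cR: "card Rst = part_sum d P - part_max d P"
    using card_Diff_subset[OF finB BV] card_V i0 by (simp add: Rst_def B_def)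
  have finR: "finite Rst" using finV by (simp add: Rst_def)
  define POS where "POS = insert None (Some ` Rst)"
  define BL where "BL = {bs :: bool list. length bs = k}"
  define \<tau> where "\<tau> u = restrict (\<lambda>oo. case oo of None \<Rightarrow> map (\<lambda>j. Inl u \<in> Pp j) [0..<k]
                     | Some w \<Rightarrow> map (\<lambda>j. Inr {u,w} \<in> Pp j) [0..<k]) POS" for u
  have tauB: "\<tau> ` B \<subseteq> PiE POS (\<lambda>_. BL)"
  proof
    fix x assume "x \<in> \<tau> ` B"
    then obtain u where x: "x = \<tau> u" by blast
    have "\<forall>oo\<in>POS. (case oo of None \<Rightarrow> map (\<lambda>j. Inl u \<in> Pp j) [0..<k]
                     | Some w \<Rightarrow> map (\<lambda>j. Inr {u,w} \<in> Pp j) [0..<k]) \<in> BL"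
      by (simp add: BL_def split: option.split)
    then show "x \<in> PiE POS (\<lambda>_. BL)" unfolding x \<tau>_def by (simp only: restrict_PiE_iff)
  qed
  have cBL: "card BL = 2 ^ k" using card_lists_length_eq[of "UNIV :: bool set" k] by (simp add: BL_def)
  have fBL: "finite BL" using finite_lists_length_eq[of "UNIV :: bool set" k] by (simp add: BL_def)
  have cPOS: "card POS = Suc (card Rst)" using finR by (simp add: card_image POS_def)
  have "card (PiE POS (\<lambda>_. BL)) = (2 ^ k) ^ Suc (card Rst)"
    using finR cBL cPOS by (simp add: card_PiE POS_def)
  then have cPi: "card (PiE POS (\<lambda>_. BL)) = 2 ^ (k * (part_sum d P - part_max d P + 1))"
    using cR by (metis Suc_eq_plus1 power_mult)
  have finPi: "finite (PiE POS (\<lambda>_. BL))" using finR fBL by (intro finite_PiE) (auto simp: POS_def)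
  have "\<not> inj_on \<tau> B"
  proof
    assume "inj_on \<tau> B"
    then have "card B \<le> card (PiE POS (\<lambda>_. BL))" using card_inj_on_le[OF _ tauB finPi] by blast
    then show False using big cPi i0 by (simp add: B_def)
  qed
  then obtain u v where uv: "u \<in> B" "v \<in> B" "u \<noteq> v" "\<tau> u = \<tau> v" unfolding inj_on_def by blast
  have pfu: "pf u = i0" "pf v = i0" using uv pf_eq i0 by (auto simp: B_def)
  show False
  proof (rule swap_lemma[OF lin Pp])
    show "u \<in> V" "v \<in> V" "u \<noteq> v" "pf u = pf v" using uv BV pfu by auto
    fix j assume j: "j < k"
    have "\<tau> u None = \<tau> v None" using uv by simp
    then have "map (\<lambda>j. Inl u \<in> Pp j) [0..<k] = map (\<lambda>j. Inl v \<in> Pp j) [0..<k]"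
      by (simp add: \<tau>_def POS_def)
    then show "Inl u \<in> Pp j \<longleftrightarrow> Inl v \<in> Pp j" using j by auto
    fix w assume w: "w \<in> V" "pf w \<noteq> pf u"
    then have "w \<in> Rst" using pfu pf_eq i0 by (auto simp: Rst_def B_def)
    have "\<tau> u (Some w) = \<tau> v (Some w)" using uv by simp
    then have "map (\<lambda>j. Inr {u,w} \<in> Pp j) [0..<k] = map (\<lambda>j. Inr {v,w} \<in> Pp j) [0..<k]"
      using \<open>w \<in> Rst\<close> by (simp add: \<tau>_def POS_def)
    then show "Inr {u,w} \<in> Pp j \<longleftrightarrow> Inr {v,w} \<in> Pp j" using j by auto
  qed
qed

end

lemma reach_noedge: assumes "snd G' = {}" "reachable G' a b" shows "a = b"
  using assms(2) unfolding reachable_def by (induction rule: rtranclp_induct) (use assms(1) in auto)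

lemma reach_refl: "reachable G' a a" unfolding reachable_def by simp

lemma comps_image: "components G' = (\<lambda>v. {w \<in> fst G'. reachable G' v w}) ` fst G'"
  by (simp add: components_def Setcompr_eq_image)

lemma comps_noedge: "snd G' = {} \<Longrightarrow> components G' = (\<lambda>v. {v}) ` fst G'"
proof -
  assume s: "snd G' = {}"
  have "{w \<in> fst G'. reachable G' v w} = {v}" if "v \<in> fst G'" for v
    using that by (auto dest: reach_noedge[OF s] intro: reach_refl)
  then show ?thesis unfolding comps_image by (rule image_cong[OF refl])
qed

lemma card_comps_noedge: "snd G' = {} \<Longrightarrow> card (components G') = card (fst G')"
  by (simp add: comps_noedge card_image)

lemma comps_conn: "fst G' \<noteq> {} \<Longrightarrow> (\<forall>v\<in>fst G'. \<forall>w\<in>fst G'. reachable G' v w) \<Longrightarrow> components G' = {fst G'}"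
proof -
  assume ne: "fst G' \<noteq> {}" and H: "\<forall>v\<in>fst G'. \<forall>w\<in>fst G'. reachable G' v w"
  have "components G' = (\<lambda>v. fst G') ` fst G'"
    unfolding comps_image by (rule image_cong[OF refl]) (use H in auto)
  then show ?thesis using ne by auto
qed

lemma Sep_ge: "finite (fst G) \<Longrightarrow> S \<subseteq> fst G \<Longrightarrow> card S \<le> k \<Longrightarrow> card (components (delete_vertices G S)) \<le> Sep G k"
  unfolding Sep_def
proof (rule Max_ge)
  assume "finite (fst G)"
  then have "finite {S. S \<subseteq> fst G \<and> card S \<le> k}" by (rule rev_finite_subset[OF finite_Pow_iff[THEN iffD2]]) auto
  then show "finite {card (components (delete_vertices G S)) |S. S \<subseteq> fst G \<and> card S \<le> k}"
    by (rule finite_image_set)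
qed auto

lemma Sep_le: "finite (fst G) \<Longrightarrow> (\<And>S. S \<subseteq> fst G \<Longrightarrow> card S \<le> k \<Longrightarrow> card (components (delete_vertices G S)) \<le> b) \<Longrightarrow> Sep G k \<le> b"
  unfolding Sep_def
proof (rule Max.boundedI)
  assume "finite (fst G)"
  then have "finite {S. S \<subseteq> fst G \<and> card S \<le> k}" by (rule rev_finite_subset[OF finite_Pow_iff[THEN iffD2]]) auto
  then show "finite {card (components (delete_vertices G S)) |S. S \<subseteq> fst G \<and> card S \<le> k}"
    by (rule finite_image_set)
  show "{card (components (delete_vertices G S)) |S. S \<subseteq> fst G \<and> card S \<le> k} \<noteq> {}" by auto
qed auto

context cmg begin

lemma sep_lower: assumes "part_max d P > 0"
  shows "part_max d P \<le> Sep G (part_sum d P - part_max d P)"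
proof -
  obtain i0 where i0: "i0 < d" "card (P i0) = part_max d P" using part_max_attained assms by blast
  define S where "S = V - P i0"
  have PV: "P i0 \<subseteq> V" using P_sub i0 by simp
  have cS: "card S = part_sum d P - part_max d P"
    using card_Diff_subset[OF finP[OF i0(1)] PV] card_V i0 by (simp add: S_def)
  have fstD: "fst (delete_vertices G S) = P i0" using PV by (auto simp: delete_vertices_def S_def)
  have sndD: "snd (delete_vertices G S) = {}"
  proof -
    have False if e: "e \<in> E" "e \<inter> S = {}" for e
    proof -
      obtain a b where ab: "e = {a,b}" "a \<in> V" "b \<in> V" "pf a \<noteq> pf b" using edge_form e(1) by blast
      then have "a \<in> P i0" "b \<in> P i0" using e(2) by (auto simp: S_def)
      then show False using ab pf_eq i0 by auto
    qed
    then show ?thesis by (auto simp: delete_vertices_def)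
  qed
  have "card (components (delete_vertices G S)) = part_max d P"
    using card_comps_noedge[OF sndD] fstD i0 by simp
  moreover have "card (components (delete_vertices G S)) \<le> Sep G (part_sum d P - part_max d P)"
    using Sep_ge[OF finV _ ] cS by (simp add: S_def)
  ultimately show ?thesis by simp
qed

lemma sep_upper: assumes bnd: "part_max d P \<le> 2 ^ (s * (part_sum d P - part_max d P + 1))"
  shows "Sep G k \<le> 2 ^ (s * (k + 1))"
proof (rule Sep_le[OF finV])
  fix S assume S: "S \<subseteq> V" "card S \<le> k"
  define W where "W = V - S"
  have fstD: "fst (delete_vertices G S) = W" by (simp add: delete_vertices_def W_def)
  have stepW: "reachable (delete_vertices G S) x y" if "x \<in> W" "y \<in> W" "pf x \<noteq> pf y" for x y
  proof -
    have "{x,y} \<in> E" using that edge_iff by (auto simp: W_def)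
    moreover have "{x,y} \<inter> S = {}" using that by (auto simp: W_def)
    ultimately have "{x,y} \<in> snd (delete_vertices G S)" by (simp add: delete_vertices_def)
    then show ?thesis unfolding reachable_def using that fstD by (intro r_into_rtranclp) auto
  qed
  show "card (components (delete_vertices G S)) \<le> 2 ^ (s * (k + 1))"
  proof (cases "\<exists>a\<in>W. \<exists>b\<in>W. pf a \<noteq> pf b")
    case True
    then obtain a b where ab: "a \<in> W" "b \<in> W" "pf a \<noteq> pf b" by blast
    have conn: "\<forall>v\<in>W. \<forall>w\<in>W. reachable (delete_vertices G S) v w"
    proof (intro ballI)
      fix v w assume vw: "v \<in> W" "w \<in> W"
      show "reachable (delete_vertices G S) v w"
      proof (cases "pf v = pf w")
        case False show ?thesis by (rule stepW[OF vw False])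
      next
        case True
        obtain z where z: "z \<in> W" "pf z \<noteq> pf v"
        proof (cases "pf a = pf v")
          case True then show ?thesis using that[of b] ab by simp
        next
          case False then show ?thesis using that[of a] ab by simp
        qed
        have r1: "reachable (delete_vertices G S) v z" by (rule stepW[OF vw(1) z(1)]) (use z(2) in simp)
        have r2: "reachable (delete_vertices G S) z w" by (rule stepW[OF z(1) vw(2)]) (use z(2) True in simp)
        show ?thesis using r1 r2 unfolding reachable_def by (rule rtranclp_trans)
      qed
    qed
    have "components (delete_vertices G S) = {W}"
      using comps_conn[of "delete_vertices G S"] fstD ab(1) conn by auto
    then show ?thesis by simp
  next
    case False
    have sndD: "snd (delete_vertices G S) = {}"
    proof -
      have False if e: "e \<in> E" "e \<inter> S = {}" for e
      proof -
        obtain a b where ab: "e = {a,b}" "a \<in> V" "b \<in> V" "pf a \<noteq> pf b" using edge_form e(1) by blast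
        then have "a \<in> W" "b \<in> W" using e(2) by (auto simp: W_def)
        then show False using ab(4) False by blast
      qed
      then show ?thesis by (auto simp: delete_vertices_def)
    qed
    have cW: "card (components (delete_vertices G S)) = card W"
      using card_comps_noedge[OF sndD] fstD by simp
    show ?thesis
    proof (cases "W = {}")
      case True then show ?thesis using cW by simp
    next
      case False2: False
      then obtain w0 where w0: "w0 \<in> W" by blast
      define p where "p = pf w0"
      have "w0 \<in> V" using w0 by (simp add: W_def)
      then have p: "p < d" using pf_prop unfolding p_def by simp
      have allsame: "\<forall>a\<in>W. \<forall>b\<in>W. pf a = pf b" using False by meson
      have WP: "W \<subseteq> P p"
      proof
        fix x assume x: "x \<in> W"
        have "pf x = p" unfolding p_def by (rule allsame[rule_format, OF x w0])
        moreover have "x \<in> V" using x by (simp add: W_def)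
        ultimately show "x \<in> P p" using pf_prop[of x] by simp
      qed
      have VPS: "V - P p \<subseteq> S" using WP unfolding W_def by blast
      have finS: "finite S" using S(1) finV finite_subset by blast
      have c1: "card (V - P p) \<le> card S" using card_mono[OF finS VPS] .
      have c2: "card (V - P p) = card V - card (P p)" using card_Diff_subset[OF finP[OF p] P_sub[OF p]] .
      have k1: "part_sum d P - card (P p) \<le> k" using c1 c2 card_V S(2) by linarith
      have cP: "card (P p) \<le> part_max d P" using part_le_max p by simp
      have cWP: "card W \<le> card (P p)" using WP finP p by (intro card_mono) auto
      have "part_sum d P - part_max d P \<le> k" using k1 cP by linarith
      then have "s * (part_sum d P - part_max d P + 1) \<le> s * (k + 1)" by simp
      then have pw: "(2::nat) ^ (s * (part_sum d P - part_max d P + 1)) \<le> 2 ^ (s * (k + 1))"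
        by (rule power_increasing) simp
      have "card W \<le> 2 ^ (s * (k + 1))" using cWP cP bnd pw by (meson order_trans)
      then show ?thesis using cW by simp
    qed
  qed
qed

end

lemma V_empty_AI: "finite_graph G \<Longrightarrow> fst G = {} \<Longrightarrow> fst (inc_structure G) = {}"
proof -
  assume fg: "finite_graph G" and V: "fst G = {}"
  have "snd G = {}"
  proof (rule ccontr)
    assume "snd G \<noteq> {}"
    then obtain e where e: "e \<in> snd G" by blast
    then have "e \<subseteq> fst G" "card e = 2" using fg by (auto simp: finite_graph_def)
    then show False using V by simp
  qed
  then show ?thesis using V by (simp add: inc_structure_def)
qed

theorem theorem4p28:
  fixes C :: "'v graph set"
  assumes "\<forall>G\<in>C. finite_graph G \<and> (\<exists>d P. complete_multipartite G d P)"
  shows "(MSO2_orderable C \<longleftrightarrow> (\<exists>s::nat. has_SEP C (\<lambda>k. 2 ^ (s * (k + 1)))))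
       \<and> ((\<exists>s::nat. has_SEP C (\<lambda>k. 2 ^ (s * (k + 1)))) \<longleftrightarrow>
          (\<exists>s::nat. \<forall>G\<in>C. \<forall>d P. complete_multipartite G d P \<longrightarrow>
              part_max d P \<le> 2 ^ (s * (part_sum d P - part_max d P + 1))))"
proof -
  let ?S2 = "\<exists>s::nat. has_SEP C (\<lambda>k. 2 ^ (s * (k + 1)))"
  let ?S3 = "\<exists>s::nat. \<forall>G\<in>C. \<forall>d P. complete_multipartite G d P \<longrightarrow>
              part_max d P \<le> 2 ^ (s * (part_sum d P - part_max d P + 1))"
  have H: "\<And>G. G \<in> C \<Longrightarrow> finite_graph G" "\<And>G. G \<in> C \<Longrightarrow> \<exists>d P. complete_multipartite G d P"
    using assms by auto
  have s13: "?S3" if mso: "MSO2_orderable C"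
  proof -
    obtain \<phi> k where dfo: "defines_order \<phi> k (inc_structure ` C)"
      using mso unfolding MSO2_orderable_def by blast
    have "\<forall>G\<in>C. \<forall>d P. complete_multipartite G d P \<longrightarrow>
              part_max d P \<le> 2 ^ (k * (part_sum d P - part_max d P + 1))"
    proof (intro ballI allI impI)
      fix G d P assume G: "G \<in> C" and cmp: "complete_multipartite G d P"
      interpret cmg G d P using H(1)[OF G] cmp by unfold_locales
      show "part_max d P \<le> 2 ^ (k * (part_sum d P - part_max d P + 1))"
      proof (cases "part_max d P = 0")
        case True then show ?thesis by simp
      next
        case False
        then obtain i0 where i0: "i0 < d" "card (P i0) = part_max d P" using part_max_attained by blast
        then have "P i0 \<noteq> {}" using False by auto
        then have "V \<noteq> {}" using P_sub[OF i0(1)] by blast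
        then have "AI \<noteq> {}" using AI_eq by auto
        have Gin: "inc_structure G \<in> inc_structure ` C" using G by simp
        have dfo3: "\<forall>(A, R)\<in>inc_structure ` C. A \<noteq> {} \<longrightarrow>
          (\<exists>P :: nat \<Rightarrow> ('v + 'v set) set. (\<forall>i<k. P i \<subseteq> A) \<and> linear_order_on A {(a, b). a \<in> A \<and> b \<in> A \<and>
                sat A R (\<lambda>i. if i = 0 then a else b) (\<lambda>i. if i < k then P i else {}) \<phi>})"
          using dfo unfolding defines_order_def by (rule conjunct2[THEN conjunct2])
        have "case inc_structure G of (A, R) \<Rightarrow> A \<noteq> {} \<longrightarrow>
          (\<exists>P :: nat \<Rightarrow> ('v + 'v set) set. (\<forall>i<k. P i \<subseteq> A) \<and> linear_order_on A {(a, b). a \<in> A \<and> b \<in> A \<and>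
                sat A R (\<lambda>i. if i = 0 then a else b) (\<lambda>i. if i < k then P i else {}) \<phi>})"
          using bspec[OF dfo3 Gin] .
        then have "AI \<noteq> {} \<longrightarrow>
          (\<exists>P :: nat \<Rightarrow> ('v + 'v set) set. (\<forall>i<k. P i \<subseteq> AI) \<and> linear_order_on AI {(a, b). a \<in> AI \<and> b \<in> AI \<and>
                sat AI RI (\<lambda>i. if i = 0 then a else b) (\<lambda>i. if i < k then P i else {}) \<phi>})"
          by (simp only: case_prod_beta)
        then have ex: "\<exists>P :: nat \<Rightarrow> ('v + 'v set) set. (\<forall>i<k. P i \<subseteq> AI) \<and> linear_order_on AI {(a, b). a \<in> AI \<and> b \<in> AI \<and>
                sat AI RI (\<lambda>i. if i = 0 then a else b) (\<lambda>i. if i < k then P i else {}) \<phi>}"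
          using \<open>AI \<noteq> {}\<close> by (rule mp)
        from ex obtain Pp :: "nat \<Rightarrow> ('v + 'v set) set" where Pp: "(\<forall>i<k. Pp i \<subseteq> AI) \<and> linear_order_on AI {(a, b). a \<in> AI \<and> b \<in> AI \<and>
                sat AI RI (\<lambda>i. if i = 0 then a else b) (\<lambda>i. if i < k then Pp i else {}) \<phi>}" ..
        show ?thesis using bound_from_order[OF conjunct2[OF Pp] conjunct1[OF Pp]] .
      qed
    qed
    then show ?thesis by blast
  qed
  have s31: "MSO2_orderable C" if "?S3"
  proof -
    obtain s where s: "\<forall>G\<in>C. \<forall>d P. complete_multipartite G d P \<longrightarrow>
              part_max d P \<le> 2 ^ (s * (part_sum d P - part_max d P + 1))" using \<open>?S3\<close> by blast
    have "defines_order (gtop s) (8 + s) (inc_structure ` C)"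
      unfolding defines_order_def
    proof (intro conjI)
      show "fvars (gtop s) \<subseteq> {0, 1}" "svars (gtop s) \<subseteq> {..<8 + s}" using vars_gtop by auto
      show "\<forall>(A, R)\<in>inc_structure ` C. A \<noteq> {} \<longrightarrow>
        (\<exists>P :: nat \<Rightarrow> ('v + 'v set) set. (\<forall>i<8 + s. P i \<subseteq> A) \<and>
            linear_order_on A {(a, b). a \<in> A \<and> b \<in> A \<and> sat A R (\<lambda>i. if i = 0 then a else b) (\<lambda>i. if i < 8 + s then P i else {}) (gtop s)})"
      proof
        fix AR assume "AR \<in> inc_structure ` C"
        then obtain G where G: "G \<in> C" "AR = inc_structure G" by blast
        obtain d P where cmp: "complete_multipartite G d P" using H(2)[OF G(1)] by blast
        have goal: "fst (inc_structure G) \<noteq> {} \<longrightarrow>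
          (\<exists>P :: nat \<Rightarrow> ('v + 'v set) set. (\<forall>i<8 + s. P i \<subseteq> fst (inc_structure G)) \<and>
            linear_order_on (fst (inc_structure G)) {(a, b). a \<in> fst (inc_structure G) \<and> b \<in> fst (inc_structure G) \<and>
               sat (fst (inc_structure G)) (snd (inc_structure G)) (\<lambda>i. if i = 0 then a else b) (\<lambda>i. if i < 8 + s then P i else {}) (gtop s)})"
        proof
          assume ne: "fst (inc_structure G) \<noteq> {}"
          have Vne: "fst G \<noteq> {}" using ne V_empty_AI[OF H(1)[OF G(1)]] by blast
          interpret constr G d P s
            using H(1)[OF G(1)] cmp s G(1) Vne by unfold_locales auto
          show "\<exists>P :: nat \<Rightarrow> ('v + 'v set) set. (\<forall>i<8 + s. P i \<subseteq> AA) \<and>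
            linear_order_on AA {(a, b). a \<in> AA \<and> b \<in> AA \<and>
               sat AA RR (\<lambda>i. if i = 0 then a else b) (\<lambda>i. if i < 8 + s then P i else {}) (gtop s)}"
          proof (intro exI[of _ bb] conjI)
            show "\<forall>i<8 + s. bb i \<subseteq> AA" using bb_sub by blast
            show "linear_order_on AA {(a, b). a \<in> AA \<and> b \<in> AA \<and>
               sat AA RR (\<lambda>i. if i = 0 then a else b) (\<lambda>i. if i < 8 + s then bb i else {}) (gtop s)}"
              by (rule orders)
          qed
        qed
        show "case AR of (A, R) \<Rightarrow> A \<noteq> {} \<longrightarrow>
        (\<exists>P :: nat \<Rightarrow> ('v + 'v set) set. (\<forall>i<8 + s. P i \<subseteq> A) \<and>
            linear_order_on A {(a, b). a \<in> A \<and> b \<in> A \<and> sat A R (\<lambda>i. if i = 0 then a else b) (\<lambda>i. if i < 8 + s then P i else {}) (gtop s)})"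
          using goal G(2) by (simp add: case_prod_beta)
      qed
    qed
    then show ?thesis unfolding MSO2_orderable_def by blast
  qed
  have s23: "?S3" if "?S2"
  proof -
    obtain s where s: "has_SEP C (\<lambda>k. 2 ^ (s * (k + 1)))" using \<open>?S2\<close> by blast
    have "\<forall>G\<in>C. \<forall>d P. complete_multipartite G d P \<longrightarrow>
              part_max d P \<le> 2 ^ (s * (part_sum d P - part_max d P + 1))"
    proof (intro ballI allI impI)
      fix G d P assume G: "G \<in> C" and cmp: "complete_multipartite G d P"
      interpret cmg G d P using H(1)[OF G] cmp by unfold_locales
      show "part_max d P \<le> 2 ^ (s * (part_sum d P - part_max d P + 1))"
      proof (cases "part_max d P = 0")
        case True then show ?thesis by simp
      next
        case False
        then have "part_max d P \<le> Sep G (part_sum d P - part_max d P)" using sep_lower by simp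
        also have "\<dots> \<le> 2 ^ (s * (part_sum d P - part_max d P + 1))"
          using s G unfolding has_SEP_def by blast
        finally show ?thesis .
      qed
    qed
    then show ?thesis by blast
  qed
  have s32: "?S2" if "?S3"
  proof -
    obtain s where s: "\<forall>G\<in>C. \<forall>d P. complete_multipartite G d P \<longrightarrow>
              part_max d P \<le> 2 ^ (s * (part_sum d P - part_max d P + 1))" using \<open>?S3\<close> by blast
    have "has_SEP C (\<lambda>k. 2 ^ (s * (k + 1)))"
      unfolding has_SEP_def
    proof (intro ballI allI)
      fix G k assume G: "G \<in> C"
      obtain d P where cmp: "complete_multipartite G d P" using H(2)[OF G] by blast
      interpret cmg G d P using H(1)[OF G] cmp by unfold_locales
      show "Sep G k \<le> 2 ^ (s * (k + 1))" using sep_upper s G cmp by blast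
    qed
    then show ?thesis by blast
  qed
  show ?thesis using s13 s31 s23 s32 by blast
qed

end
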